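(* Let $\rho,\sigma$ be qubit states. There exists a time-covariant channel on the qubit transforming $\rho$ into $\sigma$ if and only if $$\partial_\theta^2(\Delta\Phi_\eta)\big|_{\theta=0}\ge0\quad\text{and}\quad\partial_\theta^2(\Delta\Phi_\eta)\big|_{\theta=\pi}\ge0$$ for all $0<r\le1$ and $0\le\phi<2\pi$, where $\eta=\eta(r,\theta,\phi)$. Equivalently, if and only if $\partial_\theta^2(\Delta H_\eta)|_{\theta=0}\ge0$ and $\partial_\theta^2(\Delta H_\eta)|_{\theta=\pi}\ge0$ for all such $r,\phi$.
   Context: The system $A$ is a qubit with Hamiltonian $\sigma_z$; the group $G=U(1)$ acts by $U(t)=e^{-i\sigma_zt}$, $t\in[0,2\pi)$, with normalized measure $dt/2\pi$. A channel $\mathcal{E}$ on the qubit is time-covariant if $\mathcal{E}(U(t)XU(t)^\dagger)=U(t)\mathcal{E}(X)U(t)^\dagger$ for all $t,X$. The reference $R$ is a qubit with Hamiltonian $-\sigma_z$, i.e. $U_R(t)=e^{i\sigma_zt}$. $\mathcal{G}(M)=\int_0^{2\pi}\frac{dt}{2\pi}(U_R(t)\otimes U(t))M(U_R(t)\otimes U(t))^\dagger$. For a qubit state $\tau$, $\Phi_\eta(\tau):=\inf_{X\ge0}\{\mathrm{tr}X:\mathbb{1}\otimes X-\mathcal{G}(\eta\otimes\tau)\ge0\}$ and $H_\eta(\tau)=-\log_2\Phi_\eta(\tau)$. $\Delta\Phi_\eta:=\Phi_\eta(\rho)-\Phi_\eta(\sigma)$ and $\Delta H_\eta:=H_\eta(\sigma)-H_\eta(\rho)$.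 Reference states are parametrized by spherical Bloch coordinates: $\eta(r,\theta,\phi)=\tfrac12(\mathbb{1}+r\sin\theta\cos\phi\,\sigma_x+r\sin\theta\sin\phi\,\sigma_y+r\cos\theta\,\sigma_z)$ with $0\le r\le1$, $\theta\in[0,\pi]$, $\phi\in[0,2\pi)$. *)

theory Defs
  imports "HOL-Analysis.Analysis" "Jordan_Normal_Form.Matrix"
begin

(* Matrices are Jordan_Normal_Form complex matrices; all objects are 2x2 (qubit)
   or 4x4 (reference qubit R tensor system qubit A, R is the first factor). *)

definition mtrace :: "complex mat \<Rightarrow> complex" where
  "mtrace A = (\<Sum>i<dim_row A. A $$ (i,i))"

definition madj :: "complex mat \<Rightarrow> complex mat" where
  "madj A = mat (dim_col A) (dim_row A) (\<lambda>(i,j). cnj (A $$ (j,i)))"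

definition psd :: "nat \<Rightarrow> complex mat \<Rightarrow> bool" where
  "psd n A \<longleftrightarrow> A \<in> carrier_mat n n \<and>
     (\<forall>x :: nat \<Rightarrow> complex.
        let q = (\<Sum>i<n. \<Sum>j<n. cnj (x i) * A $$ (i,j) * x j) in Im q = 0 \<and> Re q \<ge> 0)"

definition kron :: "complex mat \<Rightarrow> complex mat \<Rightarrow> complex mat" where
  "kron A B = mat (dim_row A * dim_row B) (dim_col A * dim_col B)
     (\<lambda>(i,j). A $$ (i div dim_row B, j div dim_col B) * B $$ (i mod dim_row B, j mod dim_col B))"

definition qubit_state :: "complex mat \<Rightarrow> bool" where
  "qubit_state \<rho> \<longleftrightarrow> psd 2 \<rho> \<and> mtrace \<rho> = 1"

definition sigma_x :: "complex mat" where "sigma_x = mat_of_rows_list 2 [[0,1],[1,0]]"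
definition sigma_y :: "complex mat" where "sigma_y = mat_of_rows_list 2 [[0,-\<i>],[\<i>,0]]"
definition sigma_z :: "complex mat" where "sigma_z = mat_of_rows_list 2 [[1,0],[0,-1]]"

(* U(t) = exp(-i sigma_z t) = diag(e^{-it}, e^{it}) *)
definition U :: "real \<Rightarrow> complex mat" where
  "U t = mat_of_rows_list 2 [[exp (-\<i> * t), 0], [0, exp (\<i> * t)]]"

(* U_R(t) = exp(i sigma_z t) = diag(e^{it}, e^{-it}) *)
definition U_R :: "real \<Rightarrow> complex mat" where
  "U_R t = mat_of_rows_list 2 [[exp (\<i> * t), 0], [0, exp (-\<i> * t)]]"

definition qubit_linear :: "(complex mat \<Rightarrow> complex mat) \<Rightarrow> bool" where
  "qubit_linear E \<longleftrightarrow>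
     (\<forall>X \<in> carrier_mat 2 2. E X \<in> carrier_mat 2 2) \<and>
     (\<forall>X \<in> carrier_mat 2 2. \<forall>Y \<in> carrier_mat 2 2. \<forall>a b :: complex.
        E (a \<cdot>\<^sub>m X + b \<cdot>\<^sub>m Y) = a \<cdot>\<^sub>m E X + b \<cdot>\<^sub>m E Y)"

(* (id_n \<otimes> E)(M) for M of dimension n*2 (ancilla of dimension n first) *)
definition id_tensor :: "nat \<Rightarrow> (complex mat \<Rightarrow> complex mat) \<Rightarrow> complex mat \<Rightarrow> complex mat" where
  "id_tensor n E M = mat (n*2) (n*2)
     (\<lambda>(i,j). E (mat 2 2 (\<lambda>(b,d). M $$ (2 * (i div 2) + b, 2 * (j div 2) + d)))
               $$ (i mod 2, j mod 2))"

definition completely_positive :: "(complex mat \<Rightarrow> complex mat) \<Rightarrow> bool" where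
  "completely_positive E \<longleftrightarrow>
     (\<forall>n::nat. \<forall>M. n \<ge> 1 \<longrightarrow> psd (n*2) M \<longrightarrow> psd (n*2) (id_tensor n E M))"

definition trace_preserving :: "(complex mat \<Rightarrow> complex mat) \<Rightarrow> bool" where
  "trace_preserving E \<longleftrightarrow> (\<forall>X \<in> carrier_mat 2 2. mtrace (E X) = mtrace X)"

definition qubit_channel :: "(complex mat \<Rightarrow> complex mat) \<Rightarrow> bool" where
  "qubit_channel E \<longleftrightarrow> qubit_linear E \<and> completely_positive E \<and> trace_preserving E"

definition time_covariant :: "(complex mat \<Rightarrow> complex mat) \<Rightarrow> bool" where
  "time_covariant E \<longleftrightarrow>
     (\<forall>t \<in> {0..<2*pi}. \<forall>X \<in> carrier_mat 2 2.
        E (U t * X * madj (U t)) = U t * E X * madj (U t))"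

definition twirl :: "complex mat \<Rightarrow> complex mat" where
  "twirl M = mat 4 4 (\<lambda>(i,j).
     integral {0..2*pi} (\<lambda>t. (kron (U_R t) (U t) * M * madj (kron (U_R t) (U t))) $$ (i,j))
       / complex_of_real (2*pi))"

definition Phi :: "complex mat \<Rightarrow> complex mat \<Rightarrow> real" where
  "Phi \<eta> \<tau> = Inf {Re (mtrace X) | X. psd 2 X \<and> psd 4 (kron (1\<^sub>m 2) X - twirl (kron \<eta> \<tau>))}"

definition H :: "complex mat \<Rightarrow> complex mat \<Rightarrow> real" where
  "H \<eta> \<tau> = - log 2 (Phi \<eta> \<tau>)"

definition eta :: "real \<Rightarrow> real \<Rightarrow> real \<Rightarrow> complex mat" where
  "eta r \<theta> \<phi> = (1/2 :: complex) \<cdot>\<^sub>m (1\<^sub>m 2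
      + complex_of_real (r * sin \<theta> * cos \<phi>) \<cdot>\<^sub>m sigma_x
      + complex_of_real (r * sin \<theta> * sin \<phi>) \<cdot>\<^sub>m sigma_y
      + complex_of_real (r * cos \<theta>) \<cdot>\<^sub>m sigma_z)"

end

theory Submission
  imports Defs
begin

definition qf :: "nat \<Rightarrow> complex mat \<Rightarrow> (nat \<Rightarrow> complex) \<Rightarrow> complex" where
  "qf n A x = (\<Sum>i<n. \<Sum>j<n. cnj (x i) * A $$ (i,j) * x j)"

lemma psd_qf: "psd n A \<longleftrightarrow> A \<in> carrier_mat n n \<and> (\<forall>x. Im (qf n A x) = 0 \<and> Re (qf n A x) \<ge> 0)"
  unfolding psd_def qf_def Let_def by simp

lemma sum_two_supp:
  fixes g :: "nat \<Rightarrow> complex"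
  assumes "i < n" "j < n" "i \<noteq> j" "\<And>k. k \<noteq> i \<Longrightarrow> k \<noteq> j \<Longrightarrow> g k = 0"
  shows "(\<Sum>k<n. g k) = g i + g j"
proof -
  have "(\<Sum>k<n. g k) = (\<Sum>k\<in>{i,j}. g k)"
    by (rule sum.mono_neutral_left[symmetric]) (use assms in auto)
  also have "\<dots> = g i + g j" using assms(3) by simp
  finally show ?thesis .
qed

lemma qf_two:
  assumes "i < n" "j < n" "i \<noteq> j"
  shows "qf n A (\<lambda>k. if k = i then a else if k = j then b else 0) =
    cnj a * A$$(i,i) * a + cnj a * A$$(i,j) * b + cnj b * A$$(j,i) * a + cnj b * A$$(j,j) * b"
proof -
  let ?x = "\<lambda>k. if k = i then a else if k = j then b else 0"
  have inner: "(\<Sum>l<n. cnj (?x k) * A $$ (k,l) * ?x l) = cnj (?x k) * A$$(k,i) * a + cnj (?x k) * A$$(k,j) * b" for k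
    by (subst sum_two_supp[OF assms]) (use assms in auto)
  show ?thesis unfolding qf_def inner
    by (subst sum_two_supp[OF assms]) (use assms in \<open>auto simp: algebra_simps\<close>)
qed

lemma qf_one:
  assumes "i < n"
  shows "qf n A (\<lambda>k. if k = i then a else 0) = cnj a * A$$(i,i) * a"
proof -
  have "(\<Sum>k<n. g k) = g i" if "\<And>k. k \<noteq> i \<Longrightarrow> g k = 0" for g :: "nat \<Rightarrow> complex"
  proof -
    have "(\<Sum>k<n. g k) = (\<Sum>k\<in>{i}. g k)"
      by (rule sum.mono_neutral_left[symmetric]) (use assms that in auto)
    then show ?thesis by simp
  qed
  note s = this
  show ?thesis unfolding qf_def
    by (subst s, simp, subst s, auto)
qed

lemma psd_diag:
  assumes "psd n A" "i < n"
  shows "Im (A$$(i,i)) = 0" "Re (A$$(i,i)) \<ge> 0"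
proof -
  have q: "Im (qf n A (\<lambda>k. if k = i then 1 else 0)) = 0 \<and> Re (qf n A (\<lambda>k. if k = i then 1 else 0)) \<ge> 0"
    using assms(1) unfolding psd_qf by blast
  then show "Im (A$$(i,i)) = 0" "Re (A$$(i,i)) \<ge> 0" unfolding qf_one[OF assms(2)] by auto
qed

lemma psd_herm:
  assumes "psd n A" "i < n" "j < n" "i \<noteq> j"
  shows "A$$(j,i) = cnj (A$$(i,j))"
proof -
  have d1: "Im (A$$(i,i)) = 0" and d2: "Im (A$$(j,j)) = 0" using psd_diag assms by auto
  have q1: "Im (qf n A (\<lambda>k. if k = i then 1 else if k = j then 1 else 0)) = 0"
    using assms(1) unfolding psd_qf by blast
  have q2: "Im (qf n A (\<lambda>k. if k = i then 1 else if k = j then \<i> else 0)) = 0"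
    using assms(1) unfolding psd_qf by blast
  from q1 q2 d1 d2 show ?thesis unfolding qf_two[OF assms(2-4)]
    by (auto simp: complex_eq_iff algebra_simps)
qed

lemma psd_diag_real:
  assumes "psd n A" "i < n"
  shows "A$$(i,i) = of_real (Re (A$$(i,i)))"
  using psd_diag[OF assms] by (simp add: complex_eq_iff)

lemma psd_minor:
  assumes "psd n A" "i < n" "j < n" "i \<noteq> j"
  shows "cmod (A$$(i,j))^2 \<le> Re (A$$(i,i)) * Re (A$$(j,j))"
proof -
  define \<alpha> where "\<alpha> = Re (A$$(i,i))"
  define \<delta> where "\<delta> = Re (A$$(j,j))"
  define \<beta> where "\<beta> = A$$(i,j)"
  have Ai: "A$$(i,i) = of_real \<alpha>" unfolding \<alpha>_def using psd_diag_real assms by blast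
  have Aj: "A$$(j,j) = of_real \<delta>" unfolding \<delta>_def using psd_diag_real assms by blast
  have Aji: "A$$(j,i) = cnj \<beta>" unfolding \<beta>_def using psd_herm assms by blast
  have a0: "\<alpha> \<ge> 0" "\<delta> \<ge> 0" unfolding \<alpha>_def \<delta>_def using psd_diag assms by auto
  have Q: "Re (cnj a * of_real \<alpha> * a + cnj a * \<beta> * b + cnj b * cnj \<beta> * a + cnj b * of_real \<delta> * b) \<ge> 0" for a b
  proof -
    have "Re (qf n A (\<lambda>k. if k = i then a else if k = j then b else 0)) \<ge> 0"
      using assms(1) unfolding psd_qf by blast
    then show ?thesis unfolding qf_two[OF assms(2-4)] Ai Aj Aji \<beta>_def .
  qed
  consider "\<delta> > 0" | "\<alpha> > 0" | "\<alpha> = 0" "\<delta> = 0" using a0 by linarith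
  then show ?thesis
  proof cases
    case 1
    have "Re (cnj (of_real \<delta>) * of_real \<alpha> * of_real \<delta> + cnj (of_real \<delta>) * \<beta> * (- cnj \<beta>) + cnj (- cnj \<beta>) * cnj \<beta> * of_real \<delta> + cnj (- cnj \<beta>) * of_real \<delta> * (- cnj \<beta>))
       = \<delta> * (\<alpha> * \<delta> - cmod \<beta>^2)"
      unfolding cmod_power2 by (simp add: algebra_simps power2_eq_square)
    with Q[of "of_real \<delta>" "- cnj \<beta>"] have "\<delta> * (\<alpha> * \<delta> - cmod \<beta>^2) \<ge> 0" by simp
    with 1 have "\<alpha> * \<delta> - cmod \<beta>^2 \<ge> 0" by (simp add: zero_le_mult_iff)
    then show ?thesis unfolding \<alpha>_def \<delta>_def \<beta>_def by simp
  next
    case 2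
    have "Re (cnj (- \<beta>) * of_real \<alpha> * (- \<beta>) + cnj (- \<beta>) * \<beta> * of_real \<alpha> + cnj (of_real \<alpha>) * cnj \<beta> * (-\<beta>) + cnj (of_real \<alpha>) * of_real \<delta> * of_real \<alpha>)
       = \<alpha> * (\<alpha> * \<delta> - cmod \<beta>^2)"
      unfolding cmod_power2 by (simp add: algebra_simps power2_eq_square)
    with Q[of "- \<beta>" "of_real \<alpha>"] have "\<alpha> * (\<alpha> * \<delta> - cmod \<beta>^2) \<ge> 0" by simp
    with 2 have "\<alpha> * \<delta> - cmod \<beta>^2 \<ge> 0" by (simp add: zero_le_mult_iff)
    then show ?thesis unfolding \<alpha>_def \<delta>_def \<beta>_def by simp
  next
    case 3
    have "Re (cnj 1 * of_real \<alpha> * 1 + cnj 1 * \<beta> * (- cnj \<beta>) + cnj (- cnj \<beta>) * cnj \<beta> * 1 + cnj (- cnj \<beta>) * of_real \<delta> * (- cnj \<beta>))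
       = - 2 * cmod \<beta>^2"
      using 3 unfolding cmod_power2 by (simp add: algebra_simps power2_eq_square)
    with Q[of 1 "- cnj \<beta>"] have "- 2 * cmod \<beta>^2 \<ge> 0" by simp
    then have "cmod \<beta>^2 \<le> 0" by simp
    then show ?thesis unfolding \<alpha>_def \<delta>_def \<beta>_def using 3 \<alpha>_def \<delta>_def by simp
  qed
qed

lemma exp_int_integral:
  fixes n :: int
  assumes "n \<noteq> 0"
  shows "((\<lambda>t::real. exp (\<i> * of_real (of_int n * t))) has_integral 0) {0..2*pi}"
proof -
  define F where "F = (\<lambda>z::complex. exp (\<i> * of_int n * z) / (\<i> * of_int n))"
  have d: "((\<lambda>t::real. F (of_real t)) has_vector_derivative exp (\<i> * of_real (of_int n * t))) (at t within {0..2*pi})" for t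
  proof -
    have "(F has_field_derivative exp (\<i> * of_int n * of_real t)) (at (of_real t))"
      unfolding F_def using assms
      by (auto intro!: derivative_eq_intros)
    from has_vector_derivative_real_field[OF this] show ?thesis by (simp add: mult.assoc)
  qed
  have "((\<lambda>t. exp (\<i> * of_real (of_int n * t))) has_integral (F (of_real (2*pi)) - F (of_real 0))) {0..2*pi}"
    by (rule fundamental_theorem_of_calculus) (use d in auto)
  moreover have "F (of_real (2*pi)) = F 0"
  proof -
    have "exp (\<i> * of_int n * of_real (2*pi)) = exp ((2 * of_int n * pi) * \<i>)"
      by (simp add: mult_ac)
    also have "\<dots> = 1" by (rule exp_integer_2pi) simp
    finally show ?thesis unfolding F_def by simp
  qed
  ultimately show ?thesis by simp
qed

lemma exp_int_integral_val:
  fixes n :: int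
  shows "integral {0..2*pi} (\<lambda>t::real. c * exp (\<i> * of_real (of_int n * t))) = (if n = 0 then c * of_real (2*pi) else 0)"
proof (cases "n = 0")
  case True
  then show ?thesis by (simp add: scaleR_conv_of_real mult_ac)
next
  case False
  then show ?thesis using exp_int_integral[OF False]
    by (simp add: integral_mult_right integral_unique)
qed

definition mexp :: "nat \<Rightarrow> int" where
  "mexp i = (if i = 1 then 2 else if i = 2 then -2 else 0)"

definition ph :: "nat \<Rightarrow> real \<Rightarrow> complex" where
  "ph i t = exp (\<i> * of_real (of_int (mexp i) * t))"

lemma less4_cases: "(i::nat) < 4 \<Longrightarrow> i = 0 \<or> i = 1 \<or> i = 2 \<or> i = 3" by auto
lemma less2_cases: "(i::nat) < 2 \<Longrightarrow> i = 0 \<or> i = 1" by auto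

lemma kron_dims[simp]: "dim_row (kron A B) = dim_row A * dim_row B" "dim_col (kron A B) = dim_col A * dim_col B"
  unfolding kron_def by simp_all

lemma kron_index: "i < dim_row A * dim_row B \<Longrightarrow> j < dim_col A * dim_col B \<Longrightarrow>
  kron A B $$ (i,j) = A $$ (i div dim_row B, j div dim_col B) * B $$ (i mod dim_row B, j mod dim_col B)"
  unfolding kron_def by simp

lemma U_carrier[simp]: "U t \<in> carrier_mat 2 2" "U_R t \<in> carrier_mat 2 2"
  unfolding U_def U_R_def mat_of_rows_list_def by auto

lemma U_dims[simp]: "dim_row (U t) = 2" "dim_col (U t) = 2" "dim_row (U_R t) = 2" "dim_col (U_R t) = 2"
  unfolding U_def U_R_def mat_of_rows_list_def by auto

lemma U_index: "U t $$ (0,0) = exp (-\<i> * t)" "U t $$ (0,Suc 0) = 0" "U t $$ (Suc 0,0) = 0" "U t $$ (Suc 0,Suc 0) = exp (\<i> * t)"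
  unfolding U_def mat_of_rows_list_def by auto
lemma U_R_index: "U_R t $$ (0,0) = exp (\<i> * t)" "U_R t $$ (0,Suc 0) = 0" "U_R t $$ (Suc 0,0) = 0" "U_R t $$ (Suc 0,Suc 0) = exp (-\<i> * t)"
  unfolding U_R_def mat_of_rows_list_def by auto

lemma kronU: "kron (U_R t) (U t) = mat 4 4 (\<lambda>(i,j). if i = j then ph i t else 0)"
proof (rule eq_matI)
  fix i j assume "i < dim_row (mat 4 4 (\<lambda>(i,j). if i = j then ph i t else 0))" "j < dim_col (mat 4 4 (\<lambda>(i,j). if i = j then ph i t else 0))"
  then have ij: "i < 4" "j < 4" by auto
  have e1: "exp (\<i> * t) * exp (\<i> * t) = exp (\<i> * of_real (2 * t))" by (simp add: exp_add[symmetric] algebra_simps)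
  have e2: "exp (-\<i> * t) * exp (-\<i> * t) = exp (\<i> * of_real (-2 * t))" by (simp add: exp_add[symmetric] algebra_simps)
  have e3: "exp (\<i> * t) * exp (-\<i> * t) = 1" by (simp add: exp_add[symmetric] algebra_simps)
  have e4: "exp (-\<i> * t) * exp (\<i> * t) = 1" by (simp add: exp_add[symmetric] algebra_simps)
  show "kron (U_R t) (U t) $$ (i, j) = mat 4 4 (\<lambda>(i,j). if i = j then ph i t else 0) $$ (i, j)"
    using less4_cases[OF ij(1)] less4_cases[OF ij(2)] ij
    apply (auto simp: kron_index U_index U_R_index ph_def mexp_def)
    apply (simp_all add: exp_add[symmetric] algebra_simps)
    done
qed (auto)

lemma madj_dims[simp]: "dim_row (madj A) = dim_col A" "dim_col (madj A) = dim_row A"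
  unfolding madj_def by auto

lemma madj_index: "i < dim_col A \<Longrightarrow> j < dim_row A \<Longrightarrow> madj A $$ (i,j) = cnj (A $$ (j,i))"
  unfolding madj_def by auto

lemma ifz: "(if P then x else (0::complex)) * y = (if P then x * y else 0)"
  "y * (if P then x else (0::complex)) = (if P then y * x else 0)"
  "cnj (if P then x else (0::complex)) = (if P then cnj x else 0)"
  by auto

lemma diag_conj:
  assumes M: "M \<in> carrier_mat n n" and i: "i < n" and j: "j < n"
  shows "(mat n n (\<lambda>(i,j). if i = j then f i else 0) * M * madj (mat n n (\<lambda>(i,j). if i = j then f i else 0))) $$ (i,j)
     = f i * M $$ (i,j) * cnj (f j)"
proof -
  let ?D = "mat n n (\<lambda>(i,j). if i = j then f i else 0)"
  have DM: "?D * M = mat n n (\<lambda>(i,k). f i * M $$ (i,k))"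
  proof (rule eq_matI)
    fix a b assume ab: "a < dim_row (mat n n (\<lambda>(i,k). f i * M $$ (i,k)))" "b < dim_col (mat n n (\<lambda>(i,k). f i * M $$ (i,k)))"
    then have "a < n" "b < n" by auto
    then show "(?D * M) $$ (a,b) = mat n n (\<lambda>(i,k). f i * M $$ (i,k)) $$ (a,b)"
      using M by (simp add: scalar_prod_def row_def col_def ifz sum.delta sum.delta' madj_index)
  qed (use M in auto)
  have Dadj: "madj ?D = mat n n (\<lambda>(i,j). if i = j then cnj (f i) else 0)"
    by (rule eq_matI) (auto simp: madj_index)
  show ?thesis unfolding DM Dadj using i j
    by (simp add: scalar_prod_def row_def col_def ifz sum.delta sum.delta' madj_index)
qed

lemma ph_cnj: "ph i t * c * cnj (ph j t) = c * exp (\<i> * of_real (of_int (mexp i - mexp j) * t))"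
proof -
  have "cnj (ph j t) = exp (- (\<i> * of_real (of_int (mexp j) * t)))"
    unfolding ph_def by (simp add: exp_cnj)
  then have "ph i t * cnj (ph j t) = exp (\<i> * of_real (of_int (mexp i - mexp j) * t))"
    unfolding ph_def by (simp add: exp_add[symmetric] algebra_simps)
  then show ?thesis by (metis mult.commute mult.left_commute)
qed

lemma twirl_index:
  assumes K: "K \<in> carrier_mat 4 4" and ij: "i < 4" "j < 4"
  shows "twirl K $$ (i,j) = (if mexp i = mexp j then K $$ (i,j) else 0)"
proof -
  have "twirl K $$ (i,j) = integral {0..2*pi} (\<lambda>t. K $$ (i,j) * exp (\<i> * of_real (of_int (mexp i - mexp j) * t))) / complex_of_real (2*pi)"
  proof -
    have pt: "(kron (U_R t) (U t) * K * madj (kron (U_R t) (U t))) $$ (i,j) = K $$ (i,j) * exp (\<i> * of_real (of_int (mexp i - mexp j) * t))" for t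
      unfolding kronU diag_conj[OF K ij] ph_cnj ..
    show ?thesis unfolding twirl_def by (simp only: index_mat[OF ij] prod.case pt)
  qed
  also have "\<dots> = (if mexp i = mexp j then K $$ (i,j) else 0)"
    unfolding exp_int_integral_val by simp
  finally show ?thesis .
qed

lemma twirl_carrier: "twirl K \<in> carrier_mat 4 4" unfolding twirl_def by simp

lemma sum4: "(\<Sum>i<(4::nat). f i) = f 0 + f 1 + f 2 + (f 3 :: 'a::comm_monoid_add)"
  by (simp add: eval_nat_numeral add_ac)
lemma sum2: "(\<Sum>i<(2::nat). f i) = f 0 + (f 1 :: 'a::comm_monoid_add)"
  by (simp add: eval_nat_numeral add_ac)

lemma real_amgm:
  fixes P R m :: real
  assumes "P \<ge> 0" "R \<ge> 0" "m \<ge> 0" "m^2 \<le> P * R"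
  shows "2 * m \<le> P + R"
proof (rule ccontr)
  assume "\<not> ?thesis"
  then have "2 * m > P + R" by simp
  then have "(2*m)^2 > (P+R)^2" using assms by (intro power_strict_mono) auto
  moreover have "(P+R)^2 \<ge> 4 * (P * R)"
  proof -
    have "(P+R)^2 - 4*(P*R) = (P-R)^2" by (simp add: power2_eq_square algebra_simps)
    then show ?thesis using zero_le_power2[of "P-R"] by linarith
  qed
  ultimately show False using assms(4) by (simp add: power_mult_distrib)
qed

lemma cross_term:
  fixes x y \<beta> :: complex and a b :: real
  assumes "a \<ge> 0" "b \<ge> 0" "cmod \<beta>^2 \<le> a * b"
  shows "Re (cnj x * of_real a * x + cnj x * \<beta> * y + cnj y * cnj \<beta> * x + cnj y * of_real b * y) \<ge> 0"
    "Im (cnj x * of_real a * x + cnj x * \<beta> * y + cnj y * cnj \<beta> * x + cnj y * of_real b * y) = 0"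
proof -
  define w where "w = cnj x * \<beta> * y"
  have cw: "cnj y * cnj \<beta> * x = cnj w" unfolding w_def by (simp add: mult_ac)
  have xx: "cnj x * of_real a * x = of_real (a * cmod x^2)" for x :: complex and a
    by (metis (no_types, lifting) complex_mult_cnj cmod_power2 mult.commute mult.left_commute of_real_mult)
  have e: "cnj x * of_real a * x + cnj x * \<beta> * y + cnj y * cnj \<beta> * x + cnj y * of_real b * y
    = of_real (a * cmod x^2 + b * cmod y^2) + (w + cnj w)"
    unfolding cw xx by (simp add: w_def algebra_simps)
  show "Im (cnj x * of_real a * x + cnj x * \<beta> * y + cnj y * cnj \<beta> * x + cnj y * of_real b * y) = 0"
    unfolding e by simp
  have "Re (w + cnj w) = 2 * Re w" by simp
  moreover have "Re w \<ge> - cmod w" using abs_Re_le_cmod[of w] by linarith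
  moreover have "2 * cmod w \<le> a * cmod x^2 + b * cmod y^2"
  proof (rule real_amgm)
    show "a * cmod x^2 \<ge> 0" "b * cmod y^2 \<ge> 0" "cmod w \<ge> 0" using assms by auto
    have "cmod w^2 = cmod \<beta>^2 * (cmod x^2 * cmod y^2)" unfolding w_def by (simp add: norm_mult power_mult_distrib)
    also have "\<dots> \<le> (a*b) * (cmod x^2 * cmod y^2)" using assms by (intro mult_right_mono) auto
    finally show "cmod w^2 \<le> a * cmod x^2 * (b * cmod y^2)" by (simp add: mult_ac)
  qed
  ultimately show "Re (cnj x * of_real a * x + cnj x * \<beta> * y + cnj y * cnj \<beta> * x + cnj y * of_real b * y) \<ge> 0"
    unfolding e by simp
qed

lemma nonneg_sq_term: "a \<ge> 0 \<Longrightarrow> Re (cnj x * of_real a * x) \<ge> 0 \<and> Im (cnj x * of_real a * x) = 0"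
proof -
  assume a: "a \<ge> 0"
  have "cnj x * of_real a * x = of_real (a * cmod x^2)"
    by (metis (no_types, lifting) complex_mult_cnj cmod_power2 mult.commute mult.left_commute of_real_mult)
  then have "Re (cnj x * of_real a * x) = a * cmod x^2" "Im (cnj x * of_real a * x) = 0"
    by (simp_all only: Re_complex_of_real Im_complex_of_real)
  then show ?thesis using a by simp
qed

lemma psd4_sparse:
  assumes M: "M \<in> carrier_mat 4 4"
    and off: "\<And>i j. i < 4 \<Longrightarrow> j < 4 \<Longrightarrow> i \<noteq> j \<Longrightarrow> (i,j) \<noteq> (0,3) \<Longrightarrow> (i,j) \<noteq> (3,0) \<Longrightarrow> M $$ (i,j) = 0"
    and d: "M $$ (0,0) = of_real a0" "M $$ (1,1) = of_real a1" "M $$ (2,2) = of_real a2" "M $$ (3,3) = of_real a3"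
    and b: "M $$ (0,3) = \<beta>" "M $$ (3,0) = cnj \<beta>"
    and nn: "a0 \<ge> 0" "a1 \<ge> 0" "a2 \<ge> 0" "a3 \<ge> 0" "cmod \<beta>^2 \<le> a0 * a3"
  shows "psd 4 M"
proof -
  have z: "M $$ (0,1) = 0" "M $$ (0,2) = 0" "M $$ (1,0) = 0" "M $$ (1,2) = 0" "M $$ (1,3) = 0"
     "M $$ (2,0) = 0" "M $$ (2,1) = 0" "M $$ (2,3) = 0" "M $$ (3,1) = 0" "M $$ (3,2) = 0"
    by (auto intro!: off)
  have q: "qf 4 M x = (cnj (x 0) * of_real a0 * x 0 + cnj (x 0) * \<beta> * x 3 + cnj (x 3) * cnj \<beta> * x 0 + cnj (x 3) * of_real a3 * x 3)
     + cnj (x 1) * of_real a1 * x 1 + cnj (x 2) * of_real a2 * x 2" for x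
    unfolding qf_def sum4 using z d b by (simp add: algebra_simps)
  show ?thesis unfolding psd_qf q
    using M cross_term[OF nn(1) nn(4) nn(5)] nonneg_sq_term[OF nn(2)] nonneg_sq_term[OF nn(3)]
    by (auto simp del: complex_cnj_mult)
qed

lemma psd2_diag:
  assumes M: "M \<in> carrier_mat 2 2" and "M $$ (0,1) = 0" "M $$ (1,0) = 0"
    "M $$ (0,0) = of_real a0" "M $$ (1,1) = of_real a1" "a0 \<ge> 0" "a1 \<ge> 0"
  shows "psd 2 M"
proof -
  have q: "qf 2 M x = cnj (x 0) * of_real a0 * x 0 + cnj (x 1) * of_real a1 * x 1" for x
    unfolding qf_def sum2 using assms by simp
  show ?thesis unfolding psd_qf q
    using M nonneg_sq_term[OF assms(6)] nonneg_sq_term[OF assms(7)] by auto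
qed

lemma D_index:
  assumes X: "X \<in> carrier_mat 2 2" and e: "\<eta> \<in> carrier_mat 2 2" and t: "\<tau> \<in> carrier_mat 2 2"
    and ij: "i < 4" "j < 4"
  shows "(kron (1\<^sub>m 2) X - twirl (kron \<eta> \<tau>)) $$ (i,j) =
    (1\<^sub>m 2) $$ (i div 2, j div 2) * X $$ (i mod 2, j mod 2) -
    (if mexp i = mexp j then \<eta> $$ (i div 2, j div 2) * \<tau> $$ (i mod 2, j mod 2) else 0)"
proof -
  have K: "kron \<eta> \<tau> \<in> carrier_mat 4 4" using e t unfolding kron_def by auto
  have K1: "kron (1\<^sub>m 2) X \<in> carrier_mat 4 4" using X unfolding kron_def by auto
  show ?thesis using ij X e t K K1 twirl_carrier[of "kron \<eta> \<tau>"]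
    by (simp add: twirl_index[OF K ij] kron_index)
qed

lemma real_key:
  fixes s u d k :: real
  assumes "s \<ge> 0" "u \<ge> 0" "d \<ge> 0" "k \<le> s * (u + d)" "k \<le> d^2"
  shows "k / d \<le> s + u"
proof (cases "d = 0")
  case True then show ?thesis using assms by simp
next
  case False
  then have d: "d > 0" using assms by simp
  show ?thesis
  proof (cases "k / d \<le> s")
    case True then show ?thesis using assms by simp
  next
    case False
    then have sk: "s * d < k" using d by (simp add: field_simps)
    have kd: "k \<le> d * d" using assms by (simp add: power2_eq_square)
    have sd: "s < d" 
    proof (rule ccontr)
      assume "\<not> s < d" then have "d * d \<le> s * d" using d by (intro mult_right_mono) auto
      with sk kd show False by linarith
    qed
    have ksud: "k \<le> s * u + s * d" using assms(4) by (simp add: algebra_simps)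
    have "(s + u) * d - k \<ge> 0"
    proof -
      have "0 \<le> u * (d - s)" using sd assms by simp
      also have "\<dots> = (s+u)*d - s*u - s*d" by (simp add: algebra_simps)
      also have "\<dots> \<le> (s + u) * d - k" using ksud by linarith
      finally show ?thesis .
    qed
    then show ?thesis using d by (simp add: field_simps)
  qed
qed

lemma mtrace2: "mtrace X = X $$ (0,0) + X $$ (1,1)" if "X \<in> carrier_mat 2 2"
  using that unfolding mtrace_def by (simp add: sum2)

definition Xs :: "real \<Rightarrow> real \<Rightarrow> complex mat" where
  "Xs a b = mat 2 2 (\<lambda>(i,j). if i = j then (if i = 0 then of_real a else of_real b) else 0)"

lemma Xs_carrier: "Xs a b \<in> carrier_mat 2 2" unfolding Xs_def by simp
lemma Xs_index: "Xs a b $$ (0,0) = of_real a" "Xs a b $$ (1,1) = of_real b" "Xs a b $$ (0,1) = 0" "Xs a b $$ (1,0) = 0"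
  "Xs a b $$ (Suc 0,Suc 0) = of_real b" "Xs a b $$ (0,Suc 0) = 0" "Xs a b $$ (Suc 0,0) = 0"
  unfolding Xs_def by simp_all

lemma Xs_psd: "a \<ge> 0 \<Longrightarrow> b \<ge> 0 \<Longrightarrow> psd 2 (Xs a b)"
  by (rule psd2_diag[OF Xs_carrier Xs_index(3,4,1,2)])

lemma Xs_trace: "Re (mtrace (Xs a b)) = a + b"
  using mtrace2[OF Xs_carrier] Xs_index by simp

lemma D_Xs_off:
  assumes e: "\<eta> \<in> carrier_mat 2 2" and t: "\<tau> \<in> carrier_mat 2 2"
    and ij: "i < 4" "j < 4" "i \<noteq> j" "(i,j) \<noteq> (0,3)" "(i,j) \<noteq> (3,0)"
  shows "(kron (1\<^sub>m 2) (Xs a b) - twirl (kron \<eta> \<tau>)) $$ (i,j) = 0"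
  unfolding D_index[OF Xs_carrier e t ij(1,2)]
  using less4_cases[OF ij(1)] less4_cases[OF ij(2)] ij(3-5)
  by (auto simp: mexp_def Xs_def)

lemma Phi_A:
  assumes e: "\<eta> \<in> carrier_mat 2 2" and t: "\<tau> \<in> carrier_mat 2 2"
    and e00: "\<eta> $$ (0,0) = of_real e0" and e11: "\<eta> $$ (1,1) = of_real e1"
    and e01: "\<eta> $$ (0,1) = h" and e10: "\<eta> $$ (1,0) = cnj h"
    and t00: "\<tau> $$ (0,0) = of_real p" and t11: "\<tau> $$ (1,1) = of_real (1 - p)"
    and t01: "\<tau> $$ (0,1) = c" and t10: "\<tau> $$ (1,0) = cnj c"
    and p: "0 \<le> p" "p \<le> 1" and ee: "e1 \<le> e0" "0 \<le> e0"
    and kd: "cmod h^2 * cmod c^2 \<le> ((e0 - e1) * (1 - p))^2"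
  shows "Phi \<eta> \<tau> = e0 + (cmod h^2 * cmod c^2) / ((e0 - e1) * (1 - p))"
proof -
  define k where "k = cmod h^2 * cmod c^2"
  define d where "d = (e0 - e1) * (1 - p)"
  have d0: "d \<ge> 0" unfolding d_def using p ee by simp
  have k0: "k \<ge> 0" unfolding k_def by simp
  have kd0: "k / d \<ge> 0" using d0 k0 by simp
  have kk: "cmod (h * c)^2 = k" unfolding k_def by (simp add: norm_mult power_mult_distrib)
  let ?S = "{Re (mtrace X) | X. psd 2 X \<and> psd 4 (kron (1\<^sub>m 2) X - twirl (kron \<eta> \<tau>))}"
  have low: "e0 + k / d \<le> v" if "v \<in> ?S" for v
  proof -
    obtain X where v: "v = Re (mtrace X)" and X2: "psd 2 X" and X4: "psd 4 (kron (1\<^sub>m 2) X - twirl (kron \<eta> \<tau>))"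
      using \<open>v \<in> ?S\<close> by blast
    have X: "X \<in> carrier_mat 2 2" using X2 unfolding psd_def by simp
    let ?D = "kron (1\<^sub>m 2) X - twirl (kron \<eta> \<tau>)"
    have D00: "?D $$ (0,0) = X $$ (0,0) - of_real (e0 * p)" using D_index[OF X e t, of 0 0] e00 t00 by (simp add: mexp_def)
    have D11: "?D $$ (1,1) = X $$ (1,1) - of_real (e0 * (1-p))" using D_index[OF X e t, of 1 1] e00 t11 by (simp add: mexp_def)
    have D33: "?D $$ (3,3) = X $$ (1,1) - of_real (e1 * (1-p))" using D_index[OF X e t, of 3 3] e11 t11 by (simp add: mexp_def)
    have D03: "?D $$ (0,3) = - (h * c)" using D_index[OF X e t, of 0 3] e01 t01 by (simp add: mexp_def)
    have s0: "Re (X $$ (0,0)) - e0 * p \<ge> 0" using psd_diag(2)[OF X4, of 0] D00 by simp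
    have u0: "Re (X $$ (1,1)) - e0 * (1-p) \<ge> 0" using psd_diag(2)[OF X4, of 1] D11 by simp
    have mi: "cmod (?D $$ (0,3))^2 \<le> Re (?D $$ (0,0)) * Re (?D $$ (3,3))" by (rule psd_minor[OF X4]) auto
    have mi': "k \<le> (Re (X $$ (0,0)) - e0 * p) * ((Re (X $$ (1,1)) - e0 * (1-p)) + d)"
      using mi unfolding D03 D00 D33 d_def kk[symmetric] by (simp add: algebra_simps)
    have "k / d \<le> (Re (X $$ (0,0)) - e0 * p) + (Re (X $$ (1,1)) - e0 * (1-p))"
      by (rule real_key[OF s0 u0 d0 mi']) (use kd in \<open>simp add: k_def d_def\<close>)
    then show ?thesis unfolding v mtrace2[OF X] by (simp add: algebra_simps)
  qed
  have mem: "e0 + k / d \<in> ?S"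
  proof -
    let ?X = "Xs (e0 * p + k / d) (e0 * (1 - p))"
    have "psd 2 ?X" by (rule Xs_psd) (use p ee kd0 in auto)
    moreover have "psd 4 (kron (1\<^sub>m 2) ?X - twirl (kron \<eta> \<tau>))"
    proof (rule psd4_sparse)
      show "kron (1\<^sub>m 2) ?X - twirl (kron \<eta> \<tau>) \<in> carrier_mat 4 4"
        using twirl_carrier[of "kron \<eta> \<tau>"] Xs_carrier unfolding kron_def by auto
      show "\<And>i j. i < 4 \<Longrightarrow> j < 4 \<Longrightarrow> i \<noteq> j \<Longrightarrow> (i,j) \<noteq> (0,3) \<Longrightarrow> (i,j) \<noteq> (3,0) \<Longrightarrow>
          (kron (1\<^sub>m 2) ?X - twirl (kron \<eta> \<tau>)) $$ (i,j) = 0"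
        by (rule D_Xs_off[OF e t])
      show "(kron (1\<^sub>m 2) ?X - twirl (kron \<eta> \<tau>)) $$ (0,0) = of_real (k/d)"
        using D_index[OF Xs_carrier e t, of 0 0] e00 t00 by (simp add: mexp_def Xs_index)
      show "(kron (1\<^sub>m 2) ?X - twirl (kron \<eta> \<tau>)) $$ (1,1) = of_real 0"
        using D_index[OF Xs_carrier e t, of 1 1] e00 t11 by (simp add: mexp_def Xs_index)
      show "(kron (1\<^sub>m 2) ?X - twirl (kron \<eta> \<tau>)) $$ (2,2) = of_real ((e0 - e1) * p + k/d)"
        using D_index[OF Xs_carrier e t, of 2 2] e11 t00 by (simp add: mexp_def Xs_index algebra_simps)
      show "(kron (1\<^sub>m 2) ?X - twirl (kron \<eta> \<tau>)) $$ (3,3) = of_real d"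
      proof -
        have "(kron (1\<^sub>m 2) ?X - twirl (kron \<eta> \<tau>)) $$ (3,3) = of_real (e0 * (1 - p)) - of_real e1 * of_real (1 - p)"
          using D_index[OF Xs_carrier e t, of 3 3] e11 t11 by (simp add: mexp_def Xs_index del: of_real_diff)
        also have "\<dots> = of_real d" unfolding d_def of_real_mult[symmetric] of_real_diff[symmetric]
          by (simp add: algebra_simps)
        finally show ?thesis .
      qed
      show "(kron (1\<^sub>m 2) ?X - twirl (kron \<eta> \<tau>)) $$ (0,3) = - (h * c)"
        using D_index[OF Xs_carrier e t, of 0 3] e01 t01 by (simp add: mexp_def Xs_index)
      show "(kron (1\<^sub>m 2) ?X - twirl (kron \<eta> \<tau>)) $$ (3,0) = cnj (- (h * c))"
        using D_index[OF Xs_carrier e t, of 3 0] e10 t10 by (simp add: mexp_def Xs_index)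
      show "0 \<le> k / d" "0 \<le> (0::real)" "0 \<le> d" by (rule kd0, simp, rule d0)
      show "0 \<le> (e0 - e1) * p + k / d" using ee p kd0 by simp
      show "cmod (- (h * c))^2 \<le> k / d * d"
        using kk kd0 d0 kd unfolding d_def k_def by (cases "(e0 - e1) * (1 - p) = 0") (auto simp: power2_eq_square)
    qed
    moreover have "Re (mtrace ?X) = e0 + k / d" unfolding Xs_trace by (simp add: algebra_simps)
    ultimately show ?thesis by (metis (mono_tags, lifting) mem_Collect_eq)
  qed
  show ?thesis unfolding Phi_def k_def[symmetric] d_def[symmetric]
    by (rule cInf_eq_minimum[OF mem low])
qed

lemma Phi_B:
  assumes e: "\<eta> \<in> carrier_mat 2 2" and t: "\<tau> \<in> carrier_mat 2 2"
    and e00: "\<eta> $$ (0,0) = of_real e0" and e11: "\<eta> $$ (1,1) = of_real e1"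
    and e01: "\<eta> $$ (0,1) = h" and e10: "\<eta> $$ (1,0) = cnj h"
    and t00: "\<tau> $$ (0,0) = of_real p" and t11: "\<tau> $$ (1,1) = of_real (1 - p)"
    and t01: "\<tau> $$ (0,1) = c" and t10: "\<tau> $$ (1,0) = cnj c"
    and p: "0 \<le> p" "p \<le> 1" and ee: "e0 \<le> e1" "0 \<le> e1"
    and kd: "cmod h^2 * cmod c^2 \<le> ((e1 - e0) * p)^2"
  shows "Phi \<eta> \<tau> = e1 + (cmod h^2 * cmod c^2) / ((e1 - e0) * p)"
proof -
  define k where "k = cmod h^2 * cmod c^2"
  define d where "d = (e1 - e0) * p"
  have d0: "d \<ge> 0" unfolding d_def using p ee by simp
  have k0: "k \<ge> 0" unfolding k_def by simp
  have kd0: "k / d \<ge> 0" using d0 k0 by simp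
  have kk: "cmod (h * c)^2 = k" unfolding k_def by (simp add: norm_mult power_mult_distrib)
  let ?S = "{Re (mtrace X) | X. psd 2 X \<and> psd 4 (kron (1\<^sub>m 2) X - twirl (kron \<eta> \<tau>))}"
  have low: "e1 + k / d \<le> v" if "v \<in> ?S" for v
  proof -
    obtain X where v: "v = Re (mtrace X)" and X2: "psd 2 X" and X4: "psd 4 (kron (1\<^sub>m 2) X - twirl (kron \<eta> \<tau>))"
      using \<open>v \<in> ?S\<close> by blast
    have X: "X \<in> carrier_mat 2 2" using X2 unfolding psd_def by simp
    let ?D = "kron (1\<^sub>m 2) X - twirl (kron \<eta> \<tau>)"
    have D00: "?D $$ (0,0) = X $$ (0,0) - of_real (e0 * p)" using D_index[OF X e t, of 0 0] e00 t00 by (simp add: mexp_def)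
    have D22: "?D $$ (2,2) = X $$ (0,0) - of_real (e1 * p)" using D_index[OF X e t, of 2 2] e11 t00 by (simp add: mexp_def)
    have D33: "?D $$ (3,3) = X $$ (1,1) - of_real (e1 * (1-p))" using D_index[OF X e t, of 3 3] e11 t11 by (simp add: mexp_def)
    have D03: "?D $$ (0,3) = - (h * c)" using D_index[OF X e t, of 0 3] e01 t01 by (simp add: mexp_def)
    have s0: "Re (X $$ (0,0)) - e1 * p \<ge> 0" using psd_diag(2)[OF X4, of 2] D22 by simp
    have u0: "Re (X $$ (1,1)) - e1 * (1-p) \<ge> 0" using psd_diag(2)[OF X4, of 3] D33 by simp
    have mi: "cmod (?D $$ (0,3))^2 \<le> Re (?D $$ (0,0)) * Re (?D $$ (3,3))" by (rule psd_minor[OF X4]) auto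
    have mi': "k \<le> (Re (X $$ (1,1)) - e1 * (1-p)) * ((Re (X $$ (0,0)) - e1 * p) + d)"
      using mi unfolding D03 D00 D33 d_def kk[symmetric] by (simp add: algebra_simps)
    have "k / d \<le> (Re (X $$ (1,1)) - e1 * (1-p)) + (Re (X $$ (0,0)) - e1 * p)"
      by (rule real_key[OF u0 s0 d0 mi']) (use kd in \<open>simp add: k_def d_def\<close>)
    then show ?thesis unfolding v mtrace2[OF X] by (simp add: algebra_simps)
  qed
  have mem: "e1 + k / d \<in> ?S"
  proof -
    let ?X = "Xs (e1 * p) (e1 * (1 - p) + k / d)"
    have "psd 2 ?X" by (rule Xs_psd) (use p ee kd0 in auto)
    moreover have "psd 4 (kron (1\<^sub>m 2) ?X - twirl (kron \<eta> \<tau>))"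
    proof (rule psd4_sparse)
      show "kron (1\<^sub>m 2) ?X - twirl (kron \<eta> \<tau>) \<in> carrier_mat 4 4"
        using twirl_carrier[of "kron \<eta> \<tau>"] Xs_carrier unfolding kron_def by auto
      show "\<And>i j. i < 4 \<Longrightarrow> j < 4 \<Longrightarrow> i \<noteq> j \<Longrightarrow> (i,j) \<noteq> (0,3) \<Longrightarrow> (i,j) \<noteq> (3,0) \<Longrightarrow>
          (kron (1\<^sub>m 2) ?X - twirl (kron \<eta> \<tau>)) $$ (i,j) = 0"
        by (rule D_Xs_off[OF e t])
      show "(kron (1\<^sub>m 2) ?X - twirl (kron \<eta> \<tau>)) $$ (0,0) = of_real d"
      proof -
        have "(kron (1\<^sub>m 2) ?X - twirl (kron \<eta> \<tau>)) $$ (0,0) = of_real (e1 * p) - of_real e0 * of_real p"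
          using D_index[OF Xs_carrier e t, of 0 0] e00 t00 by (simp add: mexp_def Xs_index del: of_real_diff)
        also have "\<dots> = of_real d" unfolding d_def of_real_mult[symmetric] of_real_diff[symmetric]
          by (simp add: algebra_simps)
        finally show ?thesis .
      qed
      show "(kron (1\<^sub>m 2) ?X - twirl (kron \<eta> \<tau>)) $$ (1,1) = of_real ((e1 - e0) * (1 - p) + k / d)"
      proof -
        have "(kron (1\<^sub>m 2) ?X - twirl (kron \<eta> \<tau>)) $$ (1,1) = of_real (e1 * (1 - p) + k / d) - of_real e0 * of_real (1 - p)"
          using D_index[OF Xs_carrier e t, of 1 1] e00 t11 by (simp add: mexp_def Xs_index del: of_real_diff of_real_add)
        also have "\<dots> = of_real ((e1 - e0) * (1 - p) + k / d)" unfolding of_real_mult[symmetric] of_real_diff[symmetric]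
          by (simp add: algebra_simps)
        finally show ?thesis .
      qed
      show "(kron (1\<^sub>m 2) ?X - twirl (kron \<eta> \<tau>)) $$ (2,2) = of_real 0"
        using D_index[OF Xs_carrier e t, of 2 2] e11 t00 by (simp add: mexp_def Xs_index)
      show "(kron (1\<^sub>m 2) ?X - twirl (kron \<eta> \<tau>)) $$ (3,3) = of_real (k / d)"
      proof -
        have "(kron (1\<^sub>m 2) ?X - twirl (kron \<eta> \<tau>)) $$ (3,3) = of_real (e1 * (1 - p) + k / d) - of_real e1 * of_real (1 - p)"
          using D_index[OF Xs_carrier e t, of 3 3] e11 t11 by (simp add: mexp_def Xs_index del: of_real_diff of_real_add)
        also have "\<dots> = of_real (k / d)" unfolding of_real_mult[symmetric] of_real_diff[symmetric]
          by (simp add: algebra_simps)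
        finally show ?thesis .
      qed
      show "(kron (1\<^sub>m 2) ?X - twirl (kron \<eta> \<tau>)) $$ (0,3) = - (h * c)"
        using D_index[OF Xs_carrier e t, of 0 3] e01 t01 by (simp add: mexp_def Xs_index)
      show "(kron (1\<^sub>m 2) ?X - twirl (kron \<eta> \<tau>)) $$ (3,0) = cnj (- (h * c))"
        using D_index[OF Xs_carrier e t, of 3 0] e10 t10 by (simp add: mexp_def Xs_index)
      show "0 \<le> k / d" "0 \<le> (0::real)" "0 \<le> d" by (rule kd0, simp, rule d0)
      show "0 \<le> (e1 - e0) * (1 - p) + k / d" using ee p kd0 by simp
      show "cmod (- (h * c))^2 \<le> d * (k / d)"
        using kk kd0 d0 kd unfolding d_def k_def by (cases "(e1 - e0) * p = 0") (auto simp: power2_eq_square)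
    qed
    moreover have "Re (mtrace ?X) = e1 + k / d" unfolding Xs_trace by (simp add: algebra_simps)
    ultimately show ?thesis by (metis (mono_tags, lifting) mem_Collect_eq)
  qed
  show ?thesis unfolding Phi_def k_def[symmetric] d_def[symmetric]
    by (rule cInf_eq_minimum[OF mem low])
qed

definition gfun :: "real \<Rightarrow> real \<Rightarrow> real \<Rightarrow> real" where
  "gfun a K \<theta> = (1 + a * cos \<theta>) / 2 + K * sin \<theta>^2 / cos \<theta>"

definition gfun1 :: "real \<Rightarrow> real \<Rightarrow> real \<Rightarrow> real" where
  "gfun1 a K \<theta> = - a * sin \<theta> / 2 + K * (2 * sin \<theta> + sin \<theta>^3 / cos \<theta>^2)"

lemma gfun_deriv:
  assumes "cos \<theta> \<noteq> 0"
  shows "(gfun a K has_real_derivative gfun1 a K \<theta>) (at \<theta>)"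
proof -
  have "((\<lambda>\<theta>. (1 + a * cos \<theta>) / 2 + K * sin \<theta>^2 / cos \<theta>) has_real_derivative
     (a * - sin \<theta>) / 2 + K * (2 * sin \<theta> * cos \<theta> * cos \<theta> - sin \<theta>^2 * - sin \<theta>) / (cos \<theta> * cos \<theta>)) (at \<theta>)"
    using assms by (auto intro!: derivative_eq_intros simp: power2_eq_square; simp add: algebra_simps)
  moreover have "(a * - sin \<theta>) / 2 + K * (2 * sin \<theta> * cos \<theta> * cos \<theta> - sin \<theta>^2 * - sin \<theta>) / (cos \<theta> * cos \<theta>) = gfun1 a K \<theta>"
    unfolding gfun1_def using assms by (simp add: field_simps power2_eq_square power3_eq_cube)
  ultimately show ?thesis unfolding gfun_def by simp
qed

lemma gfun1_deriv:
  assumes "sin \<zeta> = 0"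
  shows "(gfun1 a K has_real_derivative (- a / 2 + 2 * K) * cos \<zeta>) (at \<zeta>)"
proof -
  have c: "cos \<zeta> \<noteq> 0" using assms sin_cos_squared_add[of \<zeta>] by auto
  have "(gfun1 a K has_real_derivative
     - a * cos \<zeta> / 2 + K * (2 * cos \<zeta> + ((3 * sin \<zeta>^2 * cos \<zeta>) * cos \<zeta>^2 - sin \<zeta>^3 * (2 * cos \<zeta> * - sin \<zeta>)) / (cos \<zeta>^2)^2)) (at \<zeta>)"
    unfolding gfun1_def using c
    by (auto intro!: derivative_eq_intros simp: power2_eq_square power3_eq_cube)
  then show ?thesis using assms by (simp add: algebra_simps)
qed

lemma deriv2_from:
  fixes G G1 :: "real \<Rightarrow> real"
  assumes ev: "eventually (\<lambda>y. (G has_real_derivative G1 y) (at y)) (nhds x)"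
    and d: "(G1 has_real_derivative v) (at x)"
  shows "deriv (deriv G) x = v"
proof -
  have "eventually (\<lambda>y. deriv G y = G1 y) (nhds x)"
    using ev by eventually_elim (rule DERIV_imp_deriv)
  then have "deriv (deriv G) x = deriv G1 x" by (rule deriv_cong_ev) simp
  also have "\<dots> = v" using d by (rule DERIV_imp_deriv)
  finally show ?thesis .
qed

lemma deriv2_cong:
  fixes F G :: "real \<Rightarrow> real"
  assumes "eventually (\<lambda>y. F y = G y) (nhds x)"
  shows "deriv (deriv F) x = deriv (deriv G) x"
proof -
  have "eventually (\<lambda>y. eventually (\<lambda>z. F z = G z) (nhds y)) (nhds x)"
    using assms by (simp add: eventually_eventually)
  then have "eventually (\<lambda>y. deriv F y = deriv G y) (nhds x)"
    by eventually_elim (rule deriv_cong_ev, auto)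
  then show ?thesis by (rule deriv_cong_ev) simp
qed

lemma cos_ev_ne0:
  fixes \<zeta> :: real
  assumes "sin \<zeta> = 0"
  shows "eventually (\<lambda>y. cos y \<noteq> 0) (nhds \<zeta>)"
proof -
  have c: "cos \<zeta> \<noteq> 0" using assms sin_cos_squared_add[of \<zeta>] by auto
  have "open {y::real. cos y \<noteq> 0}" by (intro open_Collect_neq continuous_on_cos continuous_intros)
  from eventually_nhds_in_open[OF this, of \<zeta>] show ?thesis using c by simp
qed

lemma deriv2_gdiff:
  assumes "sin \<zeta> = 0"
  shows "deriv (deriv (\<lambda>\<theta>. gfun a K1 \<theta> - gfun a K2 \<theta>)) \<zeta> = 2 * (K1 - K2) * cos \<zeta>"
proof (rule deriv2_from)
  show "eventually (\<lambda>y. ((\<lambda>\<theta>. gfun a K1 \<theta> - gfun a K2 \<theta>) has_real_derivative gfun1 a K1 y - gfun1 a K2 y) (at y)) (nhds \<zeta>)"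
    using cos_ev_ne0[OF assms] by eventually_elim (intro derivative_intros gfun_deriv)
  have "((\<lambda>y. gfun1 a K1 y - gfun1 a K2 y) has_real_derivative (- a / 2 + 2 * K1) * cos \<zeta> - (- a / 2 + 2 * K2) * cos \<zeta>) (at \<zeta>)"
    by (intro derivative_intros gfun1_deriv assms)
  then show "((\<lambda>y. gfun1 a K1 y - gfun1 a K2 y) has_real_derivative 2 * (K1 - K2) * cos \<zeta>) (at \<zeta>)"
    by (simp add: algebra_simps)
qed

lemma gfun_at: "sin \<zeta> = 0 \<Longrightarrow> gfun a K \<zeta> = (1 + a * cos \<zeta>) / 2"
  unfolding gfun_def by simp
lemma gfun1_at: "sin \<zeta> = 0 \<Longrightarrow> gfun1 a K \<zeta> = 0"
  unfolding gfun1_def by simp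

lemma gfun_ev_pos:
  assumes "sin \<zeta> = 0" "gfun a K \<zeta> > 0"
  shows "eventually (\<lambda>y. gfun a K y > 0) (nhds \<zeta>)"
proof -
  have c: "cos \<zeta> \<noteq> 0" using assms sin_cos_squared_add[of \<zeta>] by auto
  have "isCont (gfun a K) \<zeta>" unfolding gfun_def using c by (intro continuous_intros) auto
  then have "((gfun a K) \<longlongrightarrow> gfun a K \<zeta>) (at \<zeta>)" by (simp add: isCont_def)
  from order_tendstoD(1)[OF this assms(2)] have "eventually (\<lambda>y. gfun a K y > 0) (at \<zeta>)" .
  then show ?thesis using assms(2) by (simp add: eventually_nhds_conv_at)
qed

lemma deriv2_logdiff:
  assumes s: "sin \<zeta> = 0" and p1: "gfun a K1 \<zeta> > 0" and p2: "gfun a K2 \<zeta> > 0"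
  shows "deriv (deriv (\<lambda>\<theta>. log 2 (gfun a K1 \<theta>) - log 2 (gfun a K2 \<theta>))) \<zeta>
     = 2 * (K1 - K2) * cos \<zeta> / ((1 + a * cos \<zeta>) / 2 * ln 2)"
proof (rule deriv2_from)
  let ?H1 = "\<lambda>K y. gfun1 a K y / (gfun a K y * ln 2)"
  have ld: "((\<lambda>\<theta>. log 2 (gfun a K \<theta>)) has_real_derivative ?H1 K y) (at y)"
    if "cos y \<noteq> 0" "gfun a K y > 0" for K y
  proof -
    have "((\<lambda>\<theta>. ln (gfun a K \<theta>) / ln 2) has_real_derivative (gfun1 a K y / gfun a K y) / ln 2) (at y)"
      by (auto intro!: derivative_eq_intros gfun_deriv that)
    then show ?thesis unfolding log_def by (simp add: field_simps)
  qed
  show "eventually (\<lambda>y. ((\<lambda>\<theta>. log 2 (gfun a K1 \<theta>) - log 2 (gfun a K2 \<theta>)) has_real_derivative ?H1 K1 y - ?H1 K2 y) (at y)) (nhds \<zeta>)"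
    using cos_ev_ne0[OF s] gfun_ev_pos[OF s p1] gfun_ev_pos[OF s p2]
    by eventually_elim (intro derivative_intros ld)
  have c: "cos \<zeta> \<noteq> 0" using s sin_cos_squared_add[of \<zeta>] by auto
  have hd: "(?H1 K has_real_derivative ((- a / 2 + 2 * K) * cos \<zeta>) / ((1 + a * cos \<zeta>) / 2 * ln 2)) (at \<zeta>)"
    if "gfun a K \<zeta> > 0" for K
  proof -
    have "(?H1 K has_real_derivative
      ((- a / 2 + 2 * K) * cos \<zeta> * (gfun a K \<zeta> * ln 2) - gfun1 a K \<zeta> * (gfun1 a K \<zeta> * ln 2)) / (gfun a K \<zeta> * ln 2)^2) (at \<zeta>)"
      using that by (auto intro!: derivative_eq_intros gfun_deriv gfun1_deriv s c simp: power2_eq_square)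
    then show ?thesis using that unfolding gfun1_at[OF s] gfun_at[OF s]
      by (simp add: gfun_at[OF s] power2_eq_square mult_ac)
  qed
  have "((\<lambda>y. ?H1 K1 y - ?H1 K2 y) has_real_derivative
      ((- a / 2 + 2 * K1) * cos \<zeta>) / ((1 + a * cos \<zeta>) / 2 * ln 2) - ((- a / 2 + 2 * K2) * cos \<zeta>) / ((1 + a * cos \<zeta>) / 2 * ln 2)) (at \<zeta>)"
    by (intro derivative_intros hd p1 p2)
  then show "((\<lambda>y. ?H1 K1 y - ?H1 K2 y) has_real_derivative 2 * (K1 - K2) * cos \<zeta> / ((1 + a * cos \<zeta>) / 2 * ln 2)) (at \<zeta>)"
    by (simp add: diff_divide_distrib[symmetric] algebra_simps)
qed

definition pp :: "complex mat \<Rightarrow> real" where "pp \<tau> = Re (\<tau> $$ (0,0))"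
definition cc :: "complex mat \<Rightarrow> complex" where "cc \<tau> = \<tau> $$ (0,1)"

lemma state_facts:
  assumes "qubit_state \<tau>"
  shows "\<tau> \<in> carrier_mat 2 2" "\<tau> $$ (0,0) = of_real (pp \<tau>)" "\<tau> $$ (1,1) = of_real (1 - pp \<tau>)"
    "\<tau> $$ (0,1) = cc \<tau>" "\<tau> $$ (1,0) = cnj (cc \<tau>)" "0 \<le> pp \<tau>" "pp \<tau> \<le> 1"
    "cmod (cc \<tau>)^2 \<le> pp \<tau> * (1 - pp \<tau>)"
proof -
  have P: "psd 2 \<tau>" and T: "mtrace \<tau> = 1" using assms unfolding qubit_state_def by auto
  show C: "\<tau> \<in> carrier_mat 2 2" using P unfolding psd_def by simp
  show t0: "\<tau> $$ (0,0) = of_real (pp \<tau>)" unfolding pp_def using psd_diag_real[OF P, of 0] by simp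
  have t1r: "\<tau> $$ (1,1) = of_real (Re (\<tau> $$ (1,1)))" using psd_diag_real[OF P, of 1] by simp
  have tr: "\<tau> $$ (0,0) + \<tau> $$ (1,1) = 1" using T mtrace2[OF C] by simp
  then have "Re (\<tau> $$ (1,1)) = 1 - pp \<tau>" unfolding pp_def by (metis add_diff_cancel_left' minus_complex.sel(1) one_complex.sel(1))
  then show t1: "\<tau> $$ (1,1) = of_real (1 - pp \<tau>)" using t1r by simp
  show "\<tau> $$ (0,1) = cc \<tau>" unfolding cc_def ..
  show "\<tau> $$ (1,0) = cnj (cc \<tau>)" unfolding cc_def using psd_herm[OF P, of 0 1] by simp
  show "0 \<le> pp \<tau>" unfolding pp_def using psd_diag(2)[OF P, of 0] by simp
  have "0 \<le> Re (\<tau> $$ (1,1))" using psd_diag(2)[OF P, of 1] by simp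
  then show "pp \<tau> \<le> 1" using \<open>Re (\<tau> $$ (1,1)) = 1 - pp \<tau>\<close> by simp
  show "cmod (cc \<tau>)^2 \<le> pp \<tau> * (1 - pp \<tau>)"
    using psd_minor[OF P, of 0 1] \<open>Re (\<tau> $$ (1,1)) = 1 - pp \<tau>\<close> unfolding cc_def pp_def by simp
qed

definition etah :: "real \<Rightarrow> real \<Rightarrow> real \<Rightarrow> complex" where
  "etah r \<theta> \<phi> = (of_real (r * sin \<theta> * cos \<phi>) - \<i> * of_real (r * sin \<theta> * sin \<phi>)) / 2"

lemma sigma_facts:
  "sigma_x \<in> carrier_mat 2 2" "sigma_y \<in> carrier_mat 2 2" "sigma_z \<in> carrier_mat 2 2"
  "sigma_x $$ (0,0) = 0" "sigma_x $$ (0,1) = 1" "sigma_x $$ (1,0) = 1" "sigma_x $$ (1,1) = 0"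
  "sigma_y $$ (0,0) = 0" "sigma_y $$ (0,1) = -\<i>" "sigma_y $$ (1,0) = \<i>" "sigma_y $$ (1,1) = 0"
  "sigma_z $$ (0,0) = 1" "sigma_z $$ (0,1) = 0" "sigma_z $$ (1,0) = 0" "sigma_z $$ (1,1) = -1"
  unfolding sigma_x_def sigma_y_def sigma_z_def mat_of_rows_list_def by auto

lemma eta_facts:
  "eta r \<theta> \<phi> \<in> carrier_mat 2 2"
  "eta r \<theta> \<phi> $$ (0,0) = of_real ((1 + r * cos \<theta>) / 2)"
  "eta r \<theta> \<phi> $$ (1,1) = of_real ((1 - r * cos \<theta>) / 2)"
  "eta r \<theta> \<phi> $$ (0,1) = etah r \<theta> \<phi>"
  "eta r \<theta> \<phi> $$ (1,0) = cnj (etah r \<theta> \<phi>)"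
  using sigma_facts unfolding eta_def etah_def
  by (auto simp: complex_eq_iff)

lemma etah_norm: "cmod (etah r \<theta> \<phi>)^2 = (r * sin \<theta>)^2 / 4"
proof -
  define x where "x = r * sin \<theta>"
  have re: "Re (etah r \<theta> \<phi>) = x * cos \<phi> / 2" and im: "Im (etah r \<theta> \<phi>) = - (x * sin \<phi>) / 2"
    unfolding etah_def x_def by simp_all
  have gen: "(x * a / 2)^2 + (- (x * b) / 2)^2 = x^2 * (b^2 + a^2) / 4" for a b :: real
    by (simp add: power2_eq_square field_simps)
  have "(x * cos \<phi> / 2)^2 + (- (x * sin \<phi>) / 2)^2 = x^2 * (sin \<phi>^2 + cos \<phi>^2) / 4"
    by (rule gen)
  also have "\<dots> = x^2 / 4" by simp
  finally show ?thesis unfolding cmod_power2 re im x_def .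
qed

lemma ev_pos_cont:
  fixes f :: "real \<Rightarrow> real"
  assumes "isCont f x" "0 < f x"
  shows "eventually (\<lambda>y. 0 < f y) (nhds x)"
proof -
  have "(f \<longlongrightarrow> f x) (at x)" using assms(1) by (simp add: isCont_def)
  from order_tendstoD(1)[OF this assms(2)] have "eventually (\<lambda>y. 0 < f y) (at x)" .
  then show ?thesis using assms(2) by (simp add: eventually_nhds_conv_at)
qed

lemma kd_bound:
  fixes r s co p C :: real
  assumes "C \<le> p * (1 - p)" "0 \<le> p" "p \<le> 1" "p = 1 \<or> s^2 \<le> 4 * co^2 * (1 - p)" "0 \<le> C"
  shows "(r * s)^2 / 4 * C \<le> (r * co * (1 - p))^2"
proof (cases "p = 1")
  case True
  then have "C = 0" using assms by simp
  then show ?thesis by simp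
next
  case False
  then have h: "s^2 \<le> 4 * co^2 * (1 - p)" using assms by simp
  have "p * (1 - p) \<le> 1 * (1 - p)" by (rule mult_right_mono) (use assms in auto)
  from order_trans[OF assms(1) this] have C1: "C \<le> 1 - p" by simp
  have "(r * s)^2 / 4 * C \<le> (r * s)^2 / 4 * (1 - p)" using C1 by (intro mult_left_mono) auto
  also have "\<dots> = r^2 * (1 - p) * (s^2 / 4)" by (simp add: power_mult_distrib)
  also have "\<dots> \<le> r^2 * (1 - p) * (co^2 * (1 - p))" using h assms by (intro mult_left_mono) auto
  also have "\<dots> = (r * co * (1 - p))^2" by (simp add: power_mult_distrib power2_eq_square)
  finally show ?thesis .
qed

lemma Phi_near0:
  assumes st: "qubit_state \<tau>" and r: "0 < r" "r \<le> 1"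
  shows "eventually (\<lambda>\<theta>. Phi (eta r \<theta> \<phi>) \<tau> = gfun r (r * (cmod (cc \<tau>)^2 / (1 - pp \<tau>)) / 4) \<theta>) (nhds 0)"
proof -
  note S = state_facts[OF st]
  define p where "p = pp \<tau>"
  define C where "C = cmod (cc \<tau>)^2"
  have C0: "0 \<le> C" unfolding C_def by simp
  have ev1: "eventually (\<lambda>\<theta>::real. 0 < cos \<theta>) (nhds 0)"
    by (rule ev_pos_cont) (auto intro!: continuous_intros)
  have ev2: "eventually (\<lambda>\<theta>::real. p = 1 \<or> s\<theta> \<theta>) (nhds 0)" if "\<And>\<theta>. 0 < 4 * cos \<theta>^2 * (1 - p) - sin \<theta>^2 \<Longrightarrow> s\<theta> \<theta>" for s\<theta>
  proof (cases "p = 1")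
    case True then show ?thesis by simp
  next
    case False
    then have "p < 1" using S(7) unfolding p_def by simp
    then have "eventually (\<lambda>\<theta>::real. 0 < 4 * cos \<theta>^2 * (1 - p) - sin \<theta>^2) (nhds 0)"
      by (intro ev_pos_cont) (auto intro!: continuous_intros)
    then show ?thesis by eventually_elim (use that in auto)
  qed
  have ev2': "eventually (\<lambda>\<theta>::real. p = 1 \<or> sin \<theta>^2 \<le> 4 * cos \<theta>^2 * (1 - p)) (nhds 0)"
    by (rule ev2) simp
  show ?thesis using ev1 ev2'
  proof eventually_elim
    case (elim \<theta>)
    have kd: "cmod (etah r \<theta> \<phi>)^2 * cmod (cc \<tau>)^2 \<le> (((1 + r * cos \<theta>) / 2 - (1 - r * cos \<theta>) / 2) * (1 - pp \<tau>))^2"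
    proof -
      have "(r * sin \<theta>)^2 / 4 * C \<le> (r * cos \<theta> * (1 - p))^2"
      proof (rule kd_bound)
        show "C \<le> p * (1 - p)" "0 \<le> p" "p \<le> 1" using S(6,7,8) unfolding p_def C_def by auto
        show "p = 1 \<or> sin \<theta>^2 \<le> 4 * cos \<theta>^2 * (1 - p)" using elim by blast
        show "0 \<le> C" by (rule C0)
      qed
      moreover have "(1 + r * cos \<theta>) / 2 - (1 - r * cos \<theta>) / 2 = r * cos \<theta>" by (simp add: field_simps)
      ultimately show ?thesis unfolding etah_norm C_def p_def by simp
    qed
    have "Phi (eta r \<theta> \<phi>) \<tau> = (1 + r * cos \<theta>) / 2 + cmod (etah r \<theta> \<phi>)^2 * cmod (cc \<tau>)^2 / (((1 + r * cos \<theta>) / 2 - (1 - r * cos \<theta>) / 2) * (1 - pp \<tau>))"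
      by (rule Phi_A[OF eta_facts(1) S(1) eta_facts(2,3,4,5) S(2,3,4,5,6,7) _ _ kd])
         (use elim r in \<open>auto intro: add_nonneg_nonneg\<close>)
    also have "\<dots> = gfun r (r * (cmod (cc \<tau>)^2 / (1 - pp \<tau>)) / 4) \<theta>"
    proof (cases "pp \<tau> = 1")
      case True then show ?thesis unfolding gfun_def by simp
    next
      case False
      then have "1 - pp \<tau> \<noteq> 0" by simp
      have dd: "(1 + r * cos \<theta>) / 2 - (1 - r * cos \<theta>) / 2 = r * cos \<theta>" by (simp add: field_simps)
      have gen: "(r * s)^2 / 4 * C' / (r * co * q) = r * (C' / q) / 4 * s^2 / co"
        if "r \<noteq> 0" "co \<noteq> 0" "q \<noteq> 0" for r s co q C' :: real
        using that by (simp add: field_simps power2_eq_square)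
      show ?thesis unfolding gfun_def etah_norm dd
        using gen[of r "cos \<theta>" "1 - pp \<tau>" "sin \<theta>" "cmod (cc \<tau>)^2"] elim r \<open>1 - pp \<tau> \<noteq> 0\<close> by simp
    qed
    finally show ?case .
  qed
qed

lemma Phi_nearpi:
  assumes st: "qubit_state \<tau>" and r: "0 < r" "r \<le> 1"
  shows "eventually (\<lambda>\<theta>. Phi (eta r \<theta> \<phi>) \<tau> = gfun (- r) (- (r * (cmod (cc \<tau>)^2 / pp \<tau>) / 4)) \<theta>) (nhds pi)"
proof -
  note S = state_facts[OF st]
  define p where "p = pp \<tau>"
  define C where "C = cmod (cc \<tau>)^2"
  have C0: "0 \<le> C" unfolding C_def by simp
  have ev1: "eventually (\<lambda>\<theta>::real. 0 < - cos \<theta>) (nhds pi)"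
    by (rule ev_pos_cont) (auto intro!: continuous_intros)
  have ev2: "eventually (\<lambda>\<theta>::real. p = 0 \<or> s\<theta> \<theta>) (nhds pi)" if "\<And>\<theta>. 0 < 4 * cos \<theta>^2 * p - sin \<theta>^2 \<Longrightarrow> s\<theta> \<theta>" for s\<theta>
  proof (cases "p = 0")
    case True then show ?thesis by simp
  next
    case False
    then have "p > 0" using S(6) unfolding p_def by simp
    then have "eventually (\<lambda>\<theta>::real. 0 < 4 * cos \<theta>^2 * p - sin \<theta>^2) (nhds pi)"
      by (intro ev_pos_cont) (auto intro!: continuous_intros)
    then show ?thesis by eventually_elim (use that in auto)
  qed
  have ev2': "eventually (\<lambda>\<theta>::real. p = 0 \<or> sin \<theta>^2 \<le> 4 * cos \<theta>^2 * p) (nhds pi)"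
    by (rule ev2) simp
  show ?thesis using ev1 ev2'
  proof eventually_elim
    case (elim \<theta>)
    have dd: "(1 - r * cos \<theta>) / 2 - (1 + r * cos \<theta>) / 2 = r * (- cos \<theta>)" by (simp add: field_simps)
    have kd: "cmod (etah r \<theta> \<phi>)^2 * cmod (cc \<tau>)^2 \<le> (((1 - r * cos \<theta>) / 2 - (1 + r * cos \<theta>) / 2) * pp \<tau>)^2"
    proof -
      have "(r * sin \<theta>)^2 / 4 * C \<le> (r * (- cos \<theta>) * (1 - (1 - p)))^2"
      proof (rule kd_bound)
        show "C \<le> (1 - p) * (1 - (1 - p))" "0 \<le> 1 - p" "1 - p \<le> 1" using S(6,7,8) unfolding p_def C_def by (auto simp: mult.commute)
        show "1 - p = 1 \<or> sin \<theta>^2 \<le> 4 * (- cos \<theta>)^2 * (1 - (1 - p))" using elim by auto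
        show "0 \<le> C" by (rule C0)
      qed
      then show ?thesis unfolding etah_norm C_def p_def dd by simp
    qed
    have "Phi (eta r \<theta> \<phi>) \<tau> = (1 - r * cos \<theta>) / 2 + cmod (etah r \<theta> \<phi>)^2 * cmod (cc \<tau>)^2 / (((1 - r * cos \<theta>) / 2 - (1 + r * cos \<theta>) / 2) * pp \<tau>)"
    proof (rule Phi_B[OF eta_facts(1) S(1) eta_facts(2,3,4,5) S(2,3,4,5,6,7) _ _ kd])
      have rc: "r * cos \<theta> \<le> 0" using elim r by (intro mult_nonneg_nonpos) auto
      then show "(1 + r * cos \<theta>) / 2 \<le> (1 - r * cos \<theta>) / 2" "0 \<le> (1 - r * cos \<theta>) / 2" by auto
    qed
    also have "\<dots> = gfun (- r) (- (r * (cmod (cc \<tau>)^2 / pp \<tau>) / 4)) \<theta>"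
    proof (cases "pp \<tau> = 0")
      case True then show ?thesis unfolding gfun_def by simp
    next
      case False
      have gen: "(r * s)^2 / 4 * C' / (r * co * q) = r * (C' / q) / 4 * s^2 / co"
        if "r \<noteq> 0" "co \<noteq> 0" "q \<noteq> 0" for r s co q C' :: real
        using that by (simp add: field_simps power2_eq_square)
      show ?thesis unfolding gfun_def etah_norm dd
        using gen[of r "- cos \<theta>" "pp \<tau>" "sin \<theta>" "cmod (cc \<tau>)^2"] elim r False by simp
    qed
    finally show ?case .
  qed
qed

definition Eb :: "nat \<Rightarrow> nat \<Rightarrow> complex mat" where
  "Eb i j = mat 2 2 (\<lambda>(a,b). if a = i \<and> b = j then 1 else 0)"

lemma Eb_carrier[simp]: "Eb i j \<in> carrier_mat 2 2" unfolding Eb_def by simp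
lemma Eb_dims[simp]: "dim_row (Eb i j) = 2" "dim_col (Eb i j) = 2" unfolding Eb_def by simp_all

lemma lin_smult:
  assumes "qubit_linear E" "X \<in> carrier_mat 2 2"
  shows "E (a \<cdot>\<^sub>m X) = a \<cdot>\<^sub>m E X"
proof -
  have EX: "E X \<in> carrier_mat 2 2" using assms unfolding qubit_linear_def by blast
  have "E (a \<cdot>\<^sub>m X + 0 \<cdot>\<^sub>m X) = a \<cdot>\<^sub>m E X + 0 \<cdot>\<^sub>m E X" using assms unfolding qubit_linear_def by blast
  moreover have "a \<cdot>\<^sub>m X + 0 \<cdot>\<^sub>m X = a \<cdot>\<^sub>m X" using assms(2) by (intro eq_matI) auto
  moreover have "a \<cdot>\<^sub>m E X + 0 \<cdot>\<^sub>m E X = a \<cdot>\<^sub>m E X" using EX by (intro eq_matI) auto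
  ultimately show ?thesis by simp
qed

lemma lin_add:
  assumes "qubit_linear E" "X \<in> carrier_mat 2 2" "Y \<in> carrier_mat 2 2"
  shows "E (X + Y) = E X + E Y"
proof -
  have EX: "E X \<in> carrier_mat 2 2" "E Y \<in> carrier_mat 2 2" using assms unfolding qubit_linear_def by blast+
  have "E (1 \<cdot>\<^sub>m X + 1 \<cdot>\<^sub>m Y) = 1 \<cdot>\<^sub>m E X + 1 \<cdot>\<^sub>m E Y" using assms unfolding qubit_linear_def by blast
  moreover have "1 \<cdot>\<^sub>m X + 1 \<cdot>\<^sub>m Y = X + Y" using assms(2,3) by (intro eq_matI) auto
  moreover have "1 \<cdot>\<^sub>m E X + 1 \<cdot>\<^sub>m E Y = E X + E Y" using EX by (intro eq_matI) auto
  ultimately show ?thesis by simp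
qed

lemma decomp2:
  assumes "X \<in> carrier_mat 2 2"
  shows "X = (X$$(0,0) \<cdot>\<^sub>m Eb 0 0 + X$$(0,1) \<cdot>\<^sub>m Eb 0 1) + (X$$(1,0) \<cdot>\<^sub>m Eb 1 0 + X$$(1,1) \<cdot>\<^sub>m Eb 1 1)"
proof (rule eq_matI)
  fix i j assume ij: "i < dim_row ((X$$(0,0) \<cdot>\<^sub>m Eb 0 0 + X$$(0,1) \<cdot>\<^sub>m Eb 0 1) + (X$$(1,0) \<cdot>\<^sub>m Eb 1 0 + X$$(1,1) \<cdot>\<^sub>m Eb 1 1))"
    "j < dim_col ((X$$(0,0) \<cdot>\<^sub>m Eb 0 0 + X$$(0,1) \<cdot>\<^sub>m Eb 0 1) + (X$$(1,0) \<cdot>\<^sub>m Eb 1 0 + X$$(1,1) \<cdot>\<^sub>m Eb 1 1))"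
  then have "i < 2" "j < 2" by auto
  then show "X $$ (i,j) = ((X$$(0,0) \<cdot>\<^sub>m Eb 0 0 + X$$(0,1) \<cdot>\<^sub>m Eb 0 1) + (X$$(1,0) \<cdot>\<^sub>m Eb 1 0 + X$$(1,1) \<cdot>\<^sub>m Eb 1 1)) $$ (i,j)"
    using less2_cases[of i] less2_cases[of j] by (auto simp: Eb_def)
qed (use assms in auto)

lemma E_decomp:
  assumes L: "qubit_linear E" and X: "X \<in> carrier_mat 2 2"
  shows "E X = (X$$(0,0) \<cdot>\<^sub>m E (Eb 0 0) + X$$(0,1) \<cdot>\<^sub>m E (Eb 0 1)) + (X$$(1,0) \<cdot>\<^sub>m E (Eb 1 0) + X$$(1,1) \<cdot>\<^sub>m E (Eb 1 1))"
proof -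
  have c: "a \<cdot>\<^sub>m Eb i j \<in> carrier_mat 2 2" for a i j by simp
  show ?thesis
    apply (subst decomp2[OF X])
    apply (simp only: lin_add[OF L] c add_carrier_mat lin_smult[OF L] Eb_carrier)
    done
qed

definition uf :: "nat \<Rightarrow> real \<Rightarrow> complex" where
  "uf i t = (if i = 0 then exp (- \<i> * t) else exp (\<i> * t))"

lemma U_diag: "U t = mat 2 2 (\<lambda>(i,j). if i = j then uf i t else 0)"
  by (rule eq_matI) (auto simp: U_def uf_def mat_of_rows_list_def dest!: less2_cases)

lemma Uconj_index:
  assumes "X \<in> carrier_mat 2 2" "i < 2" "j < 2"
  shows "(U t * X * madj (U t)) $$ (i,j) = uf i t * X $$ (i,j) * cnj (uf j t)"
  unfolding U_diag by (rule diag_conj[OF assms])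

lemma Uconj_carrier: "X \<in> carrier_mat 2 2 \<Longrightarrow> U t * X * madj (U t) \<in> carrier_mat 2 2"
  unfolding U_diag madj_def by auto

lemma uf_abs: "uf i t * cnj (uf i t) = 1"
  unfolding uf_def by (auto simp: exp_cnj exp_add[symmetric])

lemma uf_q: "uf 0 (pi/4) * cnj (uf 1 (pi/4)) = - \<i>" "uf 1 (pi/4) * cnj (uf 0 (pi/4)) = \<i>"
proof -
  have "uf 1 (pi/4) * cnj (uf 0 (pi/4)) = exp (\<i> * of_real (pi/2))"
    unfolding uf_def by (simp add: exp_cnj exp_add[symmetric] algebra_simps)
  also have "\<dots> = \<i>" using cis_pi_half by (simp add: cis_conv_exp)
  finally show "uf 1 (pi/4) * cnj (uf 0 (pi/4)) = \<i>" .
  have "uf 0 (pi/4) * cnj (uf 1 (pi/4)) = cnj (uf 1 (pi/4) * cnj (uf 0 (pi/4)))" by simp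
  also have "\<dots> = - \<i>" using \<open>uf 1 (pi/4) * cnj (uf 0 (pi/4)) = \<i>\<close> by simp
  finally show "uf 0 (pi/4) * cnj (uf 1 (pi/4)) = - \<i>" .
qed

definition om :: "nat \<Rightarrow> nat \<Rightarrow> complex" where "om a b = uf a (pi/4) * cnj (uf b (pi/4))"

lemma om_vals: "om 0 0 = 1" "om 1 1 = 1" "om 0 1 = - \<i>" "om 1 0 = \<i>"
  unfolding om_def using uf_abs uf_q by auto

lemma om_vals': "om (Suc 0) (Suc 0) = 1" "om 0 (Suc 0) = - \<i>" "om (Suc 0) 0 = \<i>"
  using om_vals by simp_all

lemma cov_entry:
  assumes C: "time_covariant E" and L: "qubit_linear E"
    and ij: "i < 2" "j < 2" and ab: "a < 2" "b < 2" and ne: "om a b \<noteq> om i j"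
  shows "E (Eb i j) $$ (a,b) = 0"
proof -
  let ?t = "pi/4"
  have t: "?t \<in> {0..<2*pi}" by auto
  have W: "U ?t * Eb i j * madj (U ?t) = om i j \<cdot>\<^sub>m Eb i j"
  proof (rule eq_matI)
    fix x y assume "x < dim_row (om i j \<cdot>\<^sub>m Eb i j)" "y < dim_col (om i j \<cdot>\<^sub>m Eb i j)"
    then have xy: "x < 2" "y < 2" by auto
    show "(U ?t * Eb i j * madj (U ?t)) $$ (x,y) = (om i j \<cdot>\<^sub>m Eb i j) $$ (x,y)"
      unfolding Uconj_index[OF Eb_carrier xy] using xy by (auto simp: Eb_def om_def)
  qed (auto simp: Uconj_carrier[OF Eb_carrier, THEN carrier_matD(1)] Uconj_carrier[OF Eb_carrier, THEN carrier_matD(2)])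
  have Y: "E (Eb i j) \<in> carrier_mat 2 2" using L unfolding qubit_linear_def by simp
  have "E (U ?t * Eb i j * madj (U ?t)) = U ?t * E (Eb i j) * madj (U ?t)"
    using C t unfolding time_covariant_def by simp
  then have "om i j \<cdot>\<^sub>m E (Eb i j) = U ?t * E (Eb i j) * madj (U ?t)"
    unfolding W lin_smult[OF L Eb_carrier] .
  then have "(om i j \<cdot>\<^sub>m E (Eb i j)) $$ (a,b) = (U ?t * E (Eb i j) * madj (U ?t)) $$ (a,b)" by simp
  then have "om i j * E (Eb i j) $$ (a,b) = om a b * E (Eb i j) $$ (a,b)"
    unfolding Uconj_index[OF Y ab] using Y ab by (simp add: om_def mult_ac)
  then show ?thesis using ne by simp
qed

lemma chan_ineq:
  fixes p a b g C :: real
  assumes p: "0 \<le> p" "p \<le> 1" and C: "0 \<le> C" "C \<le> p * (1 - p)"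
    and a: "0 \<le> a" "a \<le> 1" and b: "0 \<le> b" "b \<le> 1" and g: "0 \<le> g" "g \<le> a * b"
  shows "C * g / (1 - (p * a + (1 - p) * (1 - b))) \<le> C / (1 - p)"
    and "C * g / (p * a + (1 - p) * (1 - b)) \<le> C / p"
proof -
  define p' where "p' = p * a + (1 - p) * (1 - b)"
  have p'1: "p' \<le> 1"
  proof -
    have "p * a \<le> p * 1" using p a by (intro mult_left_mono) auto
    moreover have "(1 - p) * (1 - b) \<le> (1 - p) * 1" using p b by (intro mult_left_mono) auto
    ultimately show ?thesis unfolding p'_def by simp
  qed
  have p'0: "0 \<le> p'" unfolding p'_def using p a b by simp
  have gab: "g \<le> b" "g \<le> a"
  proof -
    have "a * b \<le> 1 * b" "a * b \<le> a * 1" using a b by (intro mult_right_mono mult_left_mono; simp)+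
    then show "g \<le> b" "g \<le> a" using g by simp_all
  qed
  have r1: "C * g / (1 - p') \<le> C / (1 - p)"
  proof (cases "p = 1 \<or> p' = 1")
    case True
    then show ?thesis
    proof
      assume "p = 1" then have "C = 0" using C by simp
      then show ?thesis by simp
    next
      assume "p' = 1" then show ?thesis using C p by simp
    qed
  next
    case False
    then have d1: "0 < 1 - p" "0 < 1 - p'" using p p'1 by auto
    have "g * (1 - p) \<le> b * (1 - p)" using gab d1 by (intro mult_right_mono) auto
    also have "\<dots> \<le> 1 - p'"
    proof -
      have "a * p \<le> 1 * p" using a p by (intro mult_right_mono) auto
      then show ?thesis unfolding p'_def by (simp add: algebra_simps)
    qed
    finally have k: "g * (1 - p) \<le> 1 - p'" .
    have "C * g * (1 - p) \<le> C * (1 - p')" using mult_left_mono[OF k C(1)] by (simp add: mult_ac)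
    then show ?thesis using d1 by (simp add: field_simps)
  qed
  have r2: "C * g / p' \<le> C / p"
  proof (cases "p = 0 \<or> p' = 0")
    case True
    then show ?thesis
    proof
      assume "p = 0" then have "C = 0" using C by simp
      then show ?thesis by simp
    next
      assume "p' = 0" then show ?thesis using C p by simp
    qed
  next
    case False
    then have d1: "0 < p" "0 < p'" using p p'0 by auto
    have "g * p \<le> a * p" using gab d1 by (intro mult_right_mono) auto
    also have "\<dots> \<le> p'"
    proof -
      have "0 \<le> (1 - p) * (1 - b)" using p b by simp
      moreover have "a * p = p * a" by simp
      ultimately show ?thesis unfolding p'_def by linarith
    qed
    finally have k: "g * p \<le> p'" .
    have "C * g * p \<le> C * p'" using mult_left_mono[OF k C(1)] by (simp add: mult_ac)
    then show ?thesis using d1 by (simp add: field_simps)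
  qed
  show "C * g / (1 - (p * a + (1 - p) * (1 - b))) \<le> C / (1 - p)" using r1 unfolding p'_def .
  show "C * g / (p * a + (1 - p) * (1 - b)) \<le> C / p" using r2 unfolding p'_def .
qed

definition Choi :: "complex mat" where
  "Choi = mat 4 4 (\<lambda>(i,j). if (i = 0 \<or> i = 3) \<and> (j = 0 \<or> j = 3) then 1 else 0)"

lemma Choi_psd: "psd (2*2) Choi"
proof -
  have q: "qf 4 Choi x = cnj (x 0 + x 3) * (x 0 + x 3)" for x
    unfolding qf_def sum4 Choi_def by (simp add: algebra_simps)
  have cz: "cnj z * z = of_real (cmod z^2)" for z :: complex
    by (metis complex_mult_cnj cmod_power2 mult.commute)
  have "Im (qf 4 Choi x) = 0 \<and> Re (qf 4 Choi x) \<ge> 0" for x unfolding q cz by simp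
  moreover have "Choi \<in> carrier_mat 4 4" unfolding Choi_def by simp
  ultimately show ?thesis unfolding psd_qf by simp
qed

lemma Choi_block:
  assumes "i < 4" "j < 4"
  shows "mat 2 2 (\<lambda>(b,d). Choi $$ (2 * (i div 2) + b, 2 * (j div 2) + d)) = Eb (i div 2) (j div 2)"
proof (rule eq_matI)
  fix x y assume "x < dim_row (Eb (i div 2) (j div 2))" "y < dim_col (Eb (i div 2) (j div 2))"
  then have xy: "x < 2" "y < 2" by auto
  show "mat 2 2 (\<lambda>(b,d). Choi $$ (2 * (i div 2) + b, 2 * (j div 2) + d)) $$ (x,y) = Eb (i div 2) (j div 2) $$ (x,y)"
    using less4_cases[OF assms(1)] less4_cases[OF assms(2)] less2_cases[OF xy(1)] less2_cases[OF xy(2)]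
    by (auto simp: Choi_def Eb_def)
qed auto

lemma idt_Choi:
  assumes "i < 4" "j < 4"
  shows "id_tensor 2 E Choi $$ (i,j) = E (Eb (i div 2) (j div 2)) $$ (i mod 2, j mod 2)"
  unfolding id_tensor_def using assms by (simp add: Choi_block)

definition cond :: "complex mat \<Rightarrow> complex mat \<Rightarrow> bool" where
  "cond \<rho> \<sigma> \<longleftrightarrow> cmod (cc \<sigma>)^2 / (1 - pp \<sigma>) \<le> cmod (cc \<rho>)^2 / (1 - pp \<rho>)
     \<and> cmod (cc \<sigma>)^2 / pp \<sigma> \<le> cmod (cc \<rho>)^2 / pp \<rho>"

lemma forward:
  assumes r: "qubit_state \<rho>" and s: "qubit_state \<sigma>"
    and ch: "qubit_channel E" and cov: "time_covariant E" and eq: "E \<rho> = \<sigma>"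
  shows "cond \<rho> \<sigma>"
proof -
  have L: "qubit_linear E" and CP: "completely_positive E" and TP: "trace_preserving E"
    using ch unfolding qubit_channel_def by auto
  have Ec: "E (Eb i j) \<in> carrier_mat 2 2" for i j using L unfolding qubit_linear_def by simp
  note R = state_facts[OF r]
  note S = state_facts[OF s]
  have N: "psd (2*2) (id_tensor 2 E Choi)"
  proof -
    have "\<forall>M. psd (2*2) M \<longrightarrow> psd (2*2) (id_tensor 2 E M)"
      using CP unfolding completely_positive_def by (metis one_le_numeral)
    then show ?thesis using Choi_psd by blast
  qed
  then have N4: "psd 4 (id_tensor 2 E Choi)" by simp
  have N00: "id_tensor 2 E Choi $$ (0,0) = E (Eb 0 0) $$ (0,0)" by (simp add: idt_Choi)
  have N11: "id_tensor 2 E Choi $$ (1,1) = E (Eb 0 0) $$ (1,1)" by (simp add: idt_Choi)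
  have N22: "id_tensor 2 E Choi $$ (2,2) = E (Eb 1 1) $$ (0,0)" by (simp add: idt_Choi)
  have N33: "id_tensor 2 E Choi $$ (3,3) = E (Eb 1 1) $$ (1,1)" by (simp add: idt_Choi)
  have N03: "id_tensor 2 E Choi $$ (0,3) = E (Eb 0 1) $$ (0,1)" by (simp add: idt_Choi)
  define A where "A = E (Eb 0 0) $$ (0,0)"
  define B where "B = E (Eb 1 1) $$ (1,1)"
  define \<gamma> where "\<gamma> = E (Eb 0 1) $$ (0,1)"
  define a where "a = Re A"
  define b where "b = Re B"
  have Ar: "A = of_real a" unfolding a_def A_def using psd_diag_real[OF N4, of 0] N00 by simp
  have Br: "B = of_real b" unfolding b_def B_def using psd_diag_real[OF N4, of 3] N33 by simp
  have a0: "0 \<le> a" unfolding a_def A_def using psd_diag(2)[OF N4, of 0] N00 by simp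
  have b0: "0 \<le> b" unfolding b_def B_def using psd_diag(2)[OF N4, of 3] N33 by simp
  have tr00: "E (Eb 0 0) $$ (0,0) + E (Eb 0 0) $$ (1,1) = 1"
  proof -
    have "mtrace (E (Eb 0 0)) = mtrace (Eb 0 0)" using TP unfolding trace_preserving_def by simp
    moreover have "mtrace (Eb 0 0) = 1" by (simp add: mtrace2 Eb_def)
    ultimately show ?thesis using mtrace2[OF Ec[of 0 0]] by simp
  qed
  have tr11: "E (Eb 1 1) $$ (0,0) + E (Eb 1 1) $$ (1,1) = 1"
  proof -
    have "mtrace (E (Eb 1 1)) = mtrace (Eb 1 1)" using TP unfolding trace_preserving_def by simp
    moreover have "mtrace (Eb 1 1) = 1" by (simp add: mtrace2 Eb_def)
    ultimately show ?thesis using mtrace2[OF Ec[of 1 1]] by simp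
  qed
  have E00_11: "E (Eb 0 0) $$ (1,1) = 1 - A" using tr00 unfolding A_def by (simp add: algebra_simps)
  have E11_00: "E (Eb 1 1) $$ (0,0) = 1 - B" using tr11 unfolding B_def by (simp add: algebra_simps)
  have a1: "a \<le> 1" using psd_diag(2)[OF N4, of 1] N11 E00_11 Ar by simp
  have b1: "b \<le> 1" using psd_diag(2)[OF N4, of 2] N22 E11_00 Br by simp
  have g: "cmod \<gamma>^2 \<le> a * b"
    using psd_minor[OF N4, of 0 3] N00 N33 N03 unfolding \<gamma>_def a_def b_def A_def B_def by simp
  have z1: "E (Eb 0 1) $$ (0,0) = 0" by (rule cov_entry[OF cov L]) (auto simp: om_vals om_vals' complex_eq_iff)
  have z2: "E (Eb 1 0) $$ (0,0) = 0" by (rule cov_entry[OF cov L]) (auto simp: om_vals om_vals' complex_eq_iff)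
  have z3: "E (Eb 0 0) $$ (0,1) = 0" by (rule cov_entry[OF cov L]) (auto simp: om_vals om_vals' complex_eq_iff)
  have z4: "E (Eb 1 0) $$ (0,1) = 0" by (rule cov_entry[OF cov L]) (auto simp: om_vals om_vals' complex_eq_iff)
  have z5: "E (Eb 1 1) $$ (0,1) = 0" by (rule cov_entry[OF cov L]) (auto simp: om_vals om_vals' complex_eq_iff)
  have dec: "\<sigma> = (\<rho>$$(0,0) \<cdot>\<^sub>m E (Eb 0 0) + \<rho>$$(0,1) \<cdot>\<^sub>m E (Eb 0 1)) + (\<rho>$$(1,0) \<cdot>\<^sub>m E (Eb 1 0) + \<rho>$$(1,1) \<cdot>\<^sub>m E (Eb 1 1))"
    using E_decomp[OF L R(1)] eq by simp
  have s00: "\<sigma> $$ (0,0) = \<rho>$$(0,0) * A + \<rho>$$(1,1) * (1 - B)"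
    using Ec[of 0 0] Ec[of 0 1] Ec[of 1 0] Ec[of 1 1] z1 z2 E11_00
    by (subst dec) (simp add: A_def)
  have s01: "\<sigma> $$ (0,1) = \<rho>$$(0,1) * \<gamma>"
    using Ec[of 0 0] Ec[of 0 1] Ec[of 1 0] Ec[of 1 1] z3 z4 z5
    by (subst dec) (simp add: \<gamma>_def)
  have pps: "pp \<sigma> = pp \<rho> * a + (1 - pp \<rho>) * (1 - b)"
    using s00 R(2,3) Ar Br unfolding pp_def[of \<sigma>] by simp
  have ccs: "cmod (cc \<sigma>)^2 = cmod (cc \<rho>)^2 * cmod \<gamma>^2"
    using s01 R(4) unfolding cc_def by (simp add: norm_mult power_mult_distrib)
  show ?thesis unfolding cond_def ccs pps
    using chan_ineq[OF R(6,7) _ R(8) a0 a1 b0 b1 _ g] by simp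
qed

definition Ech :: "real \<Rightarrow> real \<Rightarrow> complex \<Rightarrow> complex mat \<Rightarrow> complex mat" where
  "Ech a b \<gamma> X = mat 2 2 (\<lambda>(i,j). if i = 0 then (if j = 0 then of_real a * X$$(0,0) + of_real (1-b) * X$$(1,1) else \<gamma> * X$$(0,1))
      else (if j = 0 then cnj \<gamma> * X$$(1,0) else of_real (1-a) * X$$(0,0) + of_real b * X$$(1,1)))"

lemma Ech_carrier: "Ech a b \<gamma> X \<in> carrier_mat 2 2" unfolding Ech_def by simp
lemma Ech_dims[simp]: "dim_row (Ech a b \<gamma> X) = 2" "dim_col (Ech a b \<gamma> X) = 2" unfolding Ech_def by simp_all

lemma Ech_index: "Ech a b \<gamma> X $$ (0,0) = of_real a * X$$(0,0) + of_real (1-b) * X$$(1,1)"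
  "Ech a b \<gamma> X $$ (0,1) = \<gamma> * X$$(0,1)" "Ech a b \<gamma> X $$ (1,0) = cnj \<gamma> * X$$(1,0)"
  "Ech a b \<gamma> X $$ (1,1) = of_real (1-a) * X$$(0,0) + of_real b * X$$(1,1)"
  unfolding Ech_def by simp_all

lemma Ech_index': "Ech a b \<gamma> X $$ (0,Suc 0) = \<gamma> * X$$(0,Suc 0)" "Ech a b \<gamma> X $$ (Suc 0,0) = cnj \<gamma> * X$$(Suc 0,0)"
  "Ech a b \<gamma> X $$ (Suc 0,Suc 0) = of_real (1-a) * X$$(0,0) + of_real b * X$$(Suc 0,Suc 0)"
  unfolding Ech_def by simp_all

lemma Ech_lin: "qubit_linear (Ech a b \<gamma>)"
  unfolding qubit_linear_def
proof (intro conjI ballI allI)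
  fix X :: "complex mat" show "Ech a b \<gamma> X \<in> carrier_mat 2 2" by (rule Ech_carrier)
next
  fix X Y :: "complex mat" and c d :: complex
  assume X: "X \<in> carrier_mat 2 2" and Y: "Y \<in> carrier_mat 2 2"
  show "Ech a b \<gamma> (c \<cdot>\<^sub>m X + d \<cdot>\<^sub>m Y) = c \<cdot>\<^sub>m Ech a b \<gamma> X + d \<cdot>\<^sub>m Ech a b \<gamma> Y"
  proof (rule eq_matI)
    fix i j assume "i < dim_row (c \<cdot>\<^sub>m Ech a b \<gamma> X + d \<cdot>\<^sub>m Ech a b \<gamma> Y)" "j < dim_col (c \<cdot>\<^sub>m Ech a b \<gamma> X + d \<cdot>\<^sub>m Ech a b \<gamma> Y)"
    then have ij: "i < 2" "j < 2" by (simp_all add: Ech_def)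
    show "Ech a b \<gamma> (c \<cdot>\<^sub>m X + d \<cdot>\<^sub>m Y) $$ (i, j) = (c \<cdot>\<^sub>m Ech a b \<gamma> X + d \<cdot>\<^sub>m Ech a b \<gamma> Y) $$ (i, j)"
      using less2_cases[OF ij(1)] less2_cases[OF ij(2)] X Y
      by (auto simp: Ech_def algebra_simps)
  qed (simp_all add: Ech_def)
qed

lemma Ech_tp: "trace_preserving (Ech a b \<gamma>)"
  unfolding trace_preserving_def
proof
  fix X :: "complex mat" assume X: "X \<in> carrier_mat 2 2"
  show "mtrace (Ech a b \<gamma> X) = mtrace X"
    unfolding mtrace2[OF Ech_carrier] mtrace2[OF X] Ech_index by (simp add: algebra_simps)
qed

lemma uf_cancel: "uf i t * z * cnj (uf i t) = z"
proof -
  have "uf i t * z * cnj (uf i t) = (uf i t * cnj (uf i t)) * z" by (simp add: mult_ac)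
  then show ?thesis using uf_abs by simp
qed

lemma Ech_cov: "time_covariant (Ech a b \<gamma>)"
  unfolding time_covariant_def
proof (intro ballI)
  fix t :: real and X :: "complex mat" assume X: "X \<in> carrier_mat 2 2"
  let ?W = "U t * X * madj (U t)"
  let ?V = "U t * Ech a b \<gamma> X * madj (U t)"
  have w: "?W $$ (0,0) = X $$ (0,0)" "?W $$ (1,1) = X $$ (1,1)"
     "?W $$ (0,1) = uf 0 t * X $$ (0,1) * cnj (uf 1 t)" "?W $$ (1,0) = uf 1 t * X $$ (1,0) * cnj (uf 0 t)"
    using Uconj_index[OF X, of 0 0 t] Uconj_index[OF X, of 1 1 t] Uconj_index[OF X, of 0 1 t] Uconj_index[OF X, of 1 0 t]
    by (simp_all only: uf_cancel)
  have v: "?V $$ (0,0) = Ech a b \<gamma> X $$ (0,0)" "?V $$ (1,1) = Ech a b \<gamma> X $$ (1,1)"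
     "?V $$ (0,1) = uf 0 t * Ech a b \<gamma> X $$ (0,1) * cnj (uf 1 t)" "?V $$ (1,0) = uf 1 t * Ech a b \<gamma> X $$ (1,0) * cnj (uf 0 t)"
    using Uconj_index[OF Ech_carrier, of 0 0 t] Uconj_index[OF Ech_carrier, of 1 1 t] Uconj_index[OF Ech_carrier, of 0 1 t] Uconj_index[OF Ech_carrier, of 1 0 t]
    by (simp_all only: uf_cancel)
  show "Ech a b \<gamma> ?W = ?V"
  proof (rule eq_matI)
    fix i j assume "i < dim_row ?V" "j < dim_col ?V"
    then have ij: "i < 2" "j < 2" using Uconj_carrier[OF Ech_carrier[of a b \<gamma> X], of t] by auto
    show "Ech a b \<gamma> ?W $$ (i,j) = ?V $$ (i,j)"
      using less2_cases[OF ij(1)] less2_cases[OF ij(2)]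
    proof (elim disjE)
      assume "i = 0" "j = 0" then show ?thesis by (simp only: Ech_index v w; simp add: mult_ac)
    next
      assume "i = 0" "j = 1" then show ?thesis by (simp only: Ech_index v w; simp add: mult_ac)
    next
      assume "i = 1" "j = 0" then show ?thesis by (simp only: Ech_index v w; simp add: mult_ac)
    next
      assume "i = 1" "j = 1" then show ?thesis by (simp only: Ech_index v w; simp add: mult_ac)
    qed
  qed (use Uconj_carrier[OF Ech_carrier[of a b \<gamma> X], of t] Ech_carrier in auto)
qed

lemma sum_split2: "(\<Sum>i<(n::nat)*2. f i) = (\<Sum>k<n. f (2*k) + f (2*k+1) :: 'a::comm_monoid_add)"
proof (induction n)
  case 0 then show ?case by simp
next
  case (Suc n)
  have e: "Suc n * 2 = Suc (Suc (n * 2))" by simp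
  show ?case unfolding e sum.lessThan_Suc Suc.IH by (simp add: add_ac mult.commute)
qed

lemma qf_split: "qf (n*2) A y = (\<Sum>k<n. \<Sum>l<n.
    cnj (y (2*k)) * A$$(2*k,2*l) * y (2*l) + cnj (y (2*k)) * A$$(2*k,2*l+1) * y (2*l+1)
  + cnj (y (2*k+1)) * A$$(2*k+1,2*l) * y (2*l) + cnj (y (2*k+1)) * A$$(2*k+1,2*l+1) * y (2*l+1))"
  unfolding qf_def sum_split2 by (simp add: sum.distrib add_ac)

lemma term_id:
  fixes x0 x1 y0 y1 m00 m01 m10 m11 \<alpha> \<beta> A A1 A2 B C2 G :: complex
  assumes "cnj \<alpha> = \<alpha>" "\<alpha> * \<alpha> = A" "\<alpha> * \<beta> = G" "C2 = B - cnj \<beta> * \<beta>"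
  shows "cnj x0 * (A*m00 + A1*m11) * y0 + cnj x0 * (G*m01) * y1 + cnj x1 * (cnj G*m10) * y0 + cnj x1 * (A2*m00 + B*m11) * y1
  = (cnj (\<alpha>*x0) * m00 * (\<alpha>*y0) + cnj (\<alpha>*x0) * m01 * (\<beta>*y1) + cnj (\<beta>*x1) * m10 * (\<alpha>*y0) + cnj (\<beta>*x1) * m11 * (\<beta>*y1))
   + C2 * (cnj 0 * m00 * 0 + cnj 0 * m01 * y1 + cnj x1 * m10 * 0 + cnj x1 * m11 * y1)
   + A1 * (cnj 0 * m00 * 0 + cnj 0 * m01 * y0 + cnj x0 * m10 * 0 + cnj x0 * m11 * y0)
   + A2 * (cnj x1 * m00 * y1 + cnj x1 * m01 * 0 + cnj 0 * m10 * y1 + cnj 0 * m11 * 0)"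
proof -
  have cG: "cnj G = \<alpha> * cnj \<beta>" using assms(1,3) by auto
  show ?thesis unfolding cG assms(4) assms(2)[symmetric] assms(3)[symmetric]
    using assms(1) by (simp add: algebra_simps)
qed

lemma Ech_cp:
  assumes a: "0 \<le> a" "a \<le> 1" and b: "0 \<le> b" "b \<le> 1" and g: "cmod \<gamma>^2 \<le> a * b"
  shows "completely_positive (Ech a b \<gamma>)"
  unfolding completely_positive_def
proof (intro allI impI)
  fix n :: nat and M :: "complex mat"
  assume "n \<ge> 1" and PM: "psd (n*2) M"
  let ?N = "id_tensor n (Ech a b \<gamma>) M"
  have Nc: "?N \<in> carrier_mat (n*2) (n*2)" unfolding id_tensor_def by simp
  have Nidx: "?N $$ (2*k,2*l) = of_real a * M$$(2*k,2*l) + of_real (1-b) * M$$(2*k+1,2*l+1)"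
    "?N $$ (2*k,2*l+1) = \<gamma> * M$$(2*k,2*l+1)"
    "?N $$ (2*k+1,2*l) = cnj \<gamma> * M$$(2*k+1,2*l)"
    "?N $$ (2*k+1,2*l+1) = of_real (1-a) * M$$(2*k,2*l) + of_real b * M$$(2*k+1,2*l+1)"
    if "k < n" "l < n" for k l
    using that unfolding id_tensor_def by (simp_all add: Ech_index Ech_index')
  define \<alpha> where "\<alpha> = (of_real (sqrt a) :: complex)"
  define \<beta> where "\<beta> = (if a = 0 then 0 else \<gamma> / \<alpha>)"
  have al1: "cnj \<alpha> = \<alpha>" unfolding \<alpha>_def by simp
  have al2: "\<alpha> * \<alpha> = of_real a" unfolding \<alpha>_def using a by (simp flip: of_real_mult)
  have al3: "\<alpha> * \<beta> = \<gamma>"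
  proof (cases "a = 0")
    case True then have "cmod \<gamma>^2 \<le> 0" using g by simp
    then show ?thesis using True unfolding \<beta>_def by simp
  next
    case False then have "\<alpha> \<noteq> 0" unfolding \<alpha>_def using a by simp
    then show ?thesis using False unfolding \<beta>_def by simp
  qed
  have bb: "cnj \<beta> * \<beta> = of_real (cmod \<beta>^2)" by (metis complex_mult_cnj cmod_power2 mult.commute)
  have bb_le: "cmod \<beta>^2 \<le> b"
  proof (cases "a = 0")
    case True then show ?thesis unfolding \<beta>_def using b by simp
  next
    case False
    then have a0: "a > 0" using a by simp
    have "cmod \<beta>^2 = cmod \<gamma>^2 / a" unfolding \<beta>_def \<alpha>_def using False a
      by (simp add: norm_divide power_divide)
    also have "\<dots> \<le> b" using g a0 by (simp add: divide_le_eq mult.commute)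
    finally show ?thesis .
  qed
  define y1 where "y1 = (\<lambda>(x::nat \<Rightarrow> complex) i. if even i then \<alpha> * x i else \<beta> * x i)"
  define y2 where "y2 = (\<lambda>(x::nat \<Rightarrow> complex) i. if even i then 0 else x i)"
  define y3 where "y3 = (\<lambda>(x::nat \<Rightarrow> complex) i. if even i then 0 else x (i - 1))"
  define y4 where "y4 = (\<lambda>(x::nat \<Rightarrow> complex) i. if even i then x (i + 1) else 0)"
  have yv: "y1 x (2*k) = \<alpha> * x (2*k)" "y1 x (2*k+1) = \<beta> * x (2*k+1)"
     "y2 x (2*k) = 0" "y2 x (2*k+1) = x (2*k+1)"
     "y3 x (2*k) = 0" "y3 x (2*k+1) = x (2*k)"
     "y4 x (2*k) = x (2*k+1)" "y4 x (2*k+1) = 0" for x k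
    unfolding y1_def y2_def y3_def y4_def by simp_all
  have key: "qf (n*2) ?N x = qf (n*2) M (y1 x) + of_real (b - cmod \<beta>^2) * qf (n*2) M (y2 x)
     + of_real (1 - b) * qf (n*2) M (y3 x) + of_real (1 - a) * qf (n*2) M (y4 x)" for x
  proof -
    have "qf (n*2) M (y1 x) + of_real (b - cmod \<beta>^2) * qf (n*2) M (y2 x)
     + of_real (1 - b) * qf (n*2) M (y3 x) + of_real (1 - a) * qf (n*2) M (y4 x) =
      (\<Sum>k<n. \<Sum>l<n.
        (cnj (y1 x (2*k)) * M$$(2*k,2*l) * y1 x (2*l) + cnj (y1 x (2*k)) * M$$(2*k,2*l+1) * y1 x (2*l+1)
        + cnj (y1 x (2*k+1)) * M$$(2*k+1,2*l) * y1 x (2*l) + cnj (y1 x (2*k+1)) * M$$(2*k+1,2*l+1) * y1 x (2*l+1))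
      + of_real (b - cmod \<beta>^2) * (cnj (y2 x (2*k)) * M$$(2*k,2*l) * y2 x (2*l) + cnj (y2 x (2*k)) * M$$(2*k,2*l+1) * y2 x (2*l+1)
        + cnj (y2 x (2*k+1)) * M$$(2*k+1,2*l) * y2 x (2*l) + cnj (y2 x (2*k+1)) * M$$(2*k+1,2*l+1) * y2 x (2*l+1))
      + of_real (1 - b) * (cnj (y3 x (2*k)) * M$$(2*k,2*l) * y3 x (2*l) + cnj (y3 x (2*k)) * M$$(2*k,2*l+1) * y3 x (2*l+1)
        + cnj (y3 x (2*k+1)) * M$$(2*k+1,2*l) * y3 x (2*l) + cnj (y3 x (2*k+1)) * M$$(2*k+1,2*l+1) * y3 x (2*l+1))
      + of_real (1 - a) * (cnj (y4 x (2*k)) * M$$(2*k,2*l) * y4 x (2*l) + cnj (y4 x (2*k)) * M$$(2*k,2*l+1) * y4 x (2*l+1)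
        + cnj (y4 x (2*k+1)) * M$$(2*k+1,2*l) * y4 x (2*l) + cnj (y4 x (2*k+1)) * M$$(2*k+1,2*l+1) * y4 x (2*l+1)))"
      by (simp only: qf_split sum_distrib_left sum.distrib distrib_left add.assoc)
    also have "\<dots> = (\<Sum>k<n. \<Sum>l<n.
        cnj (x (2*k)) * ?N$$(2*k,2*l) * x (2*l) + cnj (x (2*k)) * ?N$$(2*k,2*l+1) * x (2*l+1)
        + cnj (x (2*k+1)) * ?N$$(2*k+1,2*l) * x (2*l) + cnj (x (2*k+1)) * ?N$$(2*k+1,2*l+1) * x (2*l+1))"
    proof (intro sum.cong refl)
      fix k l assume "k \<in> {..<n}" "l \<in> {..<n}"
      then have kl: "k < n" "l < n" by auto
      show "(cnj (y1 x (2*k)) * M$$(2*k,2*l) * y1 x (2*l) + cnj (y1 x (2*k)) * M$$(2*k,2*l+1) * y1 x (2*l+1)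
        + cnj (y1 x (2*k+1)) * M$$(2*k+1,2*l) * y1 x (2*l) + cnj (y1 x (2*k+1)) * M$$(2*k+1,2*l+1) * y1 x (2*l+1))
      + of_real (b - cmod \<beta>^2) * (cnj (y2 x (2*k)) * M$$(2*k,2*l) * y2 x (2*l) + cnj (y2 x (2*k)) * M$$(2*k,2*l+1) * y2 x (2*l+1)
        + cnj (y2 x (2*k+1)) * M$$(2*k+1,2*l) * y2 x (2*l) + cnj (y2 x (2*k+1)) * M$$(2*k+1,2*l+1) * y2 x (2*l+1))
      + of_real (1 - b) * (cnj (y3 x (2*k)) * M$$(2*k,2*l) * y3 x (2*l) + cnj (y3 x (2*k)) * M$$(2*k,2*l+1) * y3 x (2*l+1)
        + cnj (y3 x (2*k+1)) * M$$(2*k+1,2*l) * y3 x (2*l) + cnj (y3 x (2*k+1)) * M$$(2*k+1,2*l+1) * y3 x (2*l+1))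
      + of_real (1 - a) * (cnj (y4 x (2*k)) * M$$(2*k,2*l) * y4 x (2*l) + cnj (y4 x (2*k)) * M$$(2*k,2*l+1) * y4 x (2*l+1)
        + cnj (y4 x (2*k+1)) * M$$(2*k+1,2*l) * y4 x (2*l) + cnj (y4 x (2*k+1)) * M$$(2*k+1,2*l+1) * y4 x (2*l+1)) =
        cnj (x (2*k)) * ?N$$(2*k,2*l) * x (2*l) + cnj (x (2*k)) * ?N$$(2*k,2*l+1) * x (2*l+1)
        + cnj (x (2*k+1)) * ?N$$(2*k+1,2*l) * x (2*l) + cnj (x (2*k+1)) * ?N$$(2*k+1,2*l+1) * x (2*l+1)"
        unfolding yv Nidx[OF kl]
        by (rule term_id[symmetric, OF al1 al2 al3]) (simp add: bb)
    qed
    also have "\<dots> = qf (n*2) ?N x" unfolding qf_split ..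
    finally show ?thesis by simp
  qed
  have q: "Im (qf (n*2) M y) = 0" "Re (qf (n*2) M y) \<ge> 0" for y using PM unfolding psd_qf by auto
  show "psd (n*2) ?N" unfolding psd_qf
  proof (intro conjI allI)
    show "?N \<in> carrier_mat (n*2) (n*2)" by (rule Nc)
  next
    fix x
    show "Im (qf (n*2) ?N x) = 0" unfolding key using q by simp
    have "Re (qf (n*2) ?N x) = Re (qf (n*2) M (y1 x)) + (b - cmod \<beta>^2) * Re (qf (n*2) M (y2 x))
      + (1 - b) * Re (qf (n*2) M (y3 x)) + (1 - a) * Re (qf (n*2) M (y4 x))" unfolding key by simp
    also have "\<dots> \<ge> 0" using q a b bb_le by (intro add_nonneg_nonneg mult_nonneg_nonneg) auto
    finally show "Re (qf (n*2) ?N x) \<ge> 0" .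
  qed
qed

lemma backward:
  assumes r: "qubit_state \<rho>" and s: "qubit_state \<sigma>" and cd: "cond \<rho> \<sigma>"
  shows "\<exists>E. qubit_channel E \<and> time_covariant E \<and> E \<rho> = \<sigma>"
proof -
  note R = state_facts[OF r]
  note S = state_facts[OF s]
  define p where "p = pp \<rho>"
  define p' where "p' = pp \<sigma>"
  define c where "c = cc \<rho>"
  define c' where "c' = cc \<sigma>"
  have p: "0 \<le> p" "p \<le> 1" "cmod c^2 \<le> p * (1 - p)" using R unfolding p_def c_def by auto
  have p': "0 \<le> p'" "p' \<le> 1" "cmod c'^2 \<le> p' * (1 - p')" using S unfolding p'_def c'_def by auto
  have c1: "cmod c'^2 / (1 - p') \<le> cmod c^2 / (1 - p)" and c2: "cmod c'^2 / p' \<le> cmod c^2 / p"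
    using cd unfolding cond_def p_def p'_def c_def c'_def by auto
  have cnz: "0 < p \<and> p < 1" if "c \<noteq> 0"
  proof -
    have "0 < cmod c^2" using that by simp
    then have "0 < p * (1 - p)" using p(3) by linarith
    then show ?thesis using p(1,2) by (auto simp: zero_less_mult_iff)
  qed
  have c'0: "c' = 0" if "c = 0"
  proof -
    have "cmod c'^2 \<le> 0"
    proof (cases "p' = 0 \<or> p' = 1")
      case True then show ?thesis using p'(3) by auto
    next
      case False
      then have "0 < 1 - p'" using p' by auto
      then show ?thesis using c1 that by (simp add: divide_le_0_iff)
    qed
    then show ?thesis by simp
  qed
  define a where "a = (if p \<le> p' then 1 else p' / p)"
  define b where "b = (if p \<le> p' then (if p = 1 then 1 else (1 - p') / (1 - p)) else 1)"
  define \<gamma> where "\<gamma> = (if c = 0 then 0 else c' / c)"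
  have a01: "0 \<le> a" "a \<le> 1" unfolding a_def using p p' by (auto simp: divide_le_eq)
  have b01: "0 \<le> b" "b \<le> 1" unfolding b_def using p p' by (auto simp: divide_le_eq)
  have pa: "p * a + (1 - p) * (1 - b) = p'"
  proof (cases "p \<le> p'")
    case True
    show ?thesis
    proof (cases "p = 1")
      case True then show ?thesis using \<open>p \<le> p'\<close> p' unfolding a_def b_def by simp
    next
      case False then have "1 - p \<noteq> 0" by simp
      then show ?thesis using \<open>p \<le> p'\<close> unfolding a_def b_def by (simp add: field_simps)
    qed
  next
    case False then have "p \<noteq> 0" using p' by auto
    then show ?thesis using False unfolding a_def b_def by simp
  qed
  have gc: "\<gamma> * c = c'" unfolding \<gamma>_def using c'0 by auto
  have gab: "cmod \<gamma>^2 \<le> a * b"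
  proof (cases "c = 0")
    case True then show ?thesis unfolding \<gamma>_def using a01 b01 by simp
  next
    case False
    then have pp: "0 < p" "p < 1" using cnz by auto
    have C0: "0 < cmod c^2" using False by simp
    have g: "cmod \<gamma>^2 = cmod c'^2 / cmod c^2" unfolding \<gamma>_def using False by (simp add: norm_divide power_divide)
    show ?thesis
    proof (cases "p \<le> p'")
      case True
      then have ab: "a * b = (1 - p') / (1 - p)" unfolding a_def b_def using pp by simp
      show ?thesis
      proof (cases "p' = 1")
        case True then have "cmod c'^2 \<le> 0" using p'(3) by simp
        then show ?thesis unfolding g ab using True by simp
      next
        case False then have q: "0 < 1 - p'" using p' by simp
        have "cmod c'^2 \<le> cmod c^2 * ((1 - p') / (1 - p))" using c1 q pp by (simp add: field_simps)
        then show ?thesis unfolding g ab using C0 by (simp add: divide_le_eq mult.commute)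
      qed
    next
      case False
      then have ab: "a * b = p' / p" unfolding a_def b_def by simp
      show ?thesis
      proof (cases "p' = 0")
        case True then have "cmod c'^2 \<le> 0" using p'(3) by simp
        then show ?thesis unfolding g ab using True by simp
      next
        case False then have q: "0 < p'" using p' by simp
        have "cmod c'^2 \<le> cmod c^2 * (p' / p)" using c2 q pp by (simp add: field_simps)
        then show ?thesis unfolding g ab using C0 by (simp add: divide_le_eq mult.commute)
      qed
    qed
  qed
  have eqE: "Ech a b \<gamma> \<rho> = \<sigma>"
  proof (rule eq_matI)
    fix i j assume "i < dim_row \<sigma>" "j < dim_col \<sigma>"
    then have ij: "i < 2" "j < 2" using S(1) by auto
    have e00: "Ech a b \<gamma> \<rho> $$ (0,0) = \<sigma> $$ (0,0)"
    proof -
      have "Ech a b \<gamma> \<rho> $$ (0,0) = of_real (p * a + (1 - p) * (1 - b))"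
        unfolding Ech_index R(2) R(3) p_def by (simp add: algebra_simps)
      then show ?thesis unfolding pa S(2) p'_def .
    qed
    have e11: "Ech a b \<gamma> \<rho> $$ (1,1) = \<sigma> $$ (1,1)"
    proof -
      have "Ech a b \<gamma> \<rho> $$ (1,1) = of_real (1 - (p * a + (1 - p) * (1 - b)))"
        unfolding Ech_index R(2) R(3) p_def by (simp add: algebra_simps)
      then show ?thesis unfolding pa S(3) p'_def .
    qed
    have e01: "Ech a b \<gamma> \<rho> $$ (0,1) = \<sigma> $$ (0,1)"
      unfolding Ech_index R(4) S(4) c_def[symmetric] c'_def[symmetric] using gc by simp
    have e10: "Ech a b \<gamma> \<rho> $$ (1,0) = \<sigma> $$ (1,0)"
      unfolding Ech_index R(5) S(5) c_def[symmetric] c'_def[symmetric] using gc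
      by (metis complex_cnj_mult)
    show "Ech a b \<gamma> \<rho> $$ (i,j) = \<sigma> $$ (i,j)"
      using less2_cases[OF ij(1)] less2_cases[OF ij(2)] e00 e11 e01 e10 by auto
  qed (use S(1) Ech_carrier in auto)
  have "qubit_channel (Ech a b \<gamma>)"
    unfolding qubit_channel_def using Ech_lin Ech_tp Ech_cp[OF a01 b01 gab] by blast
  then show ?thesis using Ech_cov eqE by blast
qed

lemma hh1: "2 * (r * A / 4 - r * B / 4) * cos 0 = r / 2 * (A - B)" for r A B :: real
  by (simp add: field_simps)
lemma hh2: "2 * (- (r * A / 4) - - (r * B / 4)) * cos pi = r / 2 * (A - B)" for r A B :: real
  by (simp add: field_simps)
lemma hh3: "2 * (r * A / 4 - r * B / 4) * cos 0 / ((1 + r * cos 0) / 2 * ln 2) = r / 2 * (A - B) / ((1 + r) / 2 * ln 2)" for r A B :: real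
  by (simp add: hh1[simplified])
lemma hh4: "2 * (- (r * A / 4) - - (r * B / 4)) * cos pi / ((1 + - r * cos pi) / 2 * ln 2) = r / 2 * (A - B) / ((1 + r) / 2 * ln 2)" for r A B :: real
  using hh2[of r A B] by simp

lemma dPhi0:
  assumes r: "qubit_state \<rho>" and s: "qubit_state \<sigma>" and rr: "0 < r" "r \<le> 1"
  shows "deriv (deriv (\<lambda>\<theta>. Phi (eta r \<theta> \<phi>) \<rho> - Phi (eta r \<theta> \<phi>) \<sigma>)) 0
     = r / 2 * (cmod (cc \<rho>)^2 / (1 - pp \<rho>) - cmod (cc \<sigma>)^2 / (1 - pp \<sigma>))"
proof -
  have "eventually (\<lambda>\<theta>. Phi (eta r \<theta> \<phi>) \<rho> - Phi (eta r \<theta> \<phi>) \<sigma> =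
     gfun r (r * (cmod (cc \<rho>)^2 / (1 - pp \<rho>)) / 4) \<theta> - gfun r (r * (cmod (cc \<sigma>)^2 / (1 - pp \<sigma>)) / 4) \<theta>) (nhds 0)"
    using Phi_near0[OF r rr, of \<phi>] Phi_near0[OF s rr, of \<phi>] by eventually_elim simp
  then have "deriv (deriv (\<lambda>\<theta>. Phi (eta r \<theta> \<phi>) \<rho> - Phi (eta r \<theta> \<phi>) \<sigma>)) 0 =
    deriv (deriv (\<lambda>\<theta>. gfun r (r * (cmod (cc \<rho>)^2 / (1 - pp \<rho>)) / 4) \<theta> - gfun r (r * (cmod (cc \<sigma>)^2 / (1 - pp \<sigma>)) / 4) \<theta>)) 0"
    by (rule deriv2_cong)
  also have "\<dots> = 2 * (r * (cmod (cc \<rho>)^2 / (1 - pp \<rho>)) / 4 - r * (cmod (cc \<sigma>)^2 / (1 - pp \<sigma>)) / 4) * cos 0"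
    by (rule deriv2_gdiff) simp
  also have "\<dots> = r / 2 * (cmod (cc \<rho>)^2 / (1 - pp \<rho>) - cmod (cc \<sigma>)^2 / (1 - pp \<sigma>))" by (rule hh1)
  finally show ?thesis .
qed

lemma dPhipi:
  assumes r: "qubit_state \<rho>" and s: "qubit_state \<sigma>" and rr: "0 < r" "r \<le> 1"
  shows "deriv (deriv (\<lambda>\<theta>. Phi (eta r \<theta> \<phi>) \<rho> - Phi (eta r \<theta> \<phi>) \<sigma>)) pi
     = r / 2 * (cmod (cc \<rho>)^2 / pp \<rho> - cmod (cc \<sigma>)^2 / pp \<sigma>)"
proof -
  have "eventually (\<lambda>\<theta>. Phi (eta r \<theta> \<phi>) \<rho> - Phi (eta r \<theta> \<phi>) \<sigma> =
     gfun (-r) (- (r * (cmod (cc \<rho>)^2 / pp \<rho>) / 4)) \<theta> - gfun (-r) (- (r * (cmod (cc \<sigma>)^2 / pp \<sigma>) / 4)) \<theta>) (nhds pi)"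
    using Phi_nearpi[OF r rr, of \<phi>] Phi_nearpi[OF s rr, of \<phi>] by eventually_elim simp
  then have "deriv (deriv (\<lambda>\<theta>. Phi (eta r \<theta> \<phi>) \<rho> - Phi (eta r \<theta> \<phi>) \<sigma>)) pi =
    deriv (deriv (\<lambda>\<theta>. gfun (-r) (- (r * (cmod (cc \<rho>)^2 / pp \<rho>) / 4)) \<theta> - gfun (-r) (- (r * (cmod (cc \<sigma>)^2 / pp \<sigma>) / 4)) \<theta>)) pi"
    by (rule deriv2_cong)
  also have "\<dots> = 2 * (- (r * (cmod (cc \<rho>)^2 / pp \<rho>) / 4) - - (r * (cmod (cc \<sigma>)^2 / pp \<sigma>) / 4)) * cos pi"
    by (rule deriv2_gdiff) simp
  also have "\<dots> = r / 2 * (cmod (cc \<rho>)^2 / pp \<rho> - cmod (cc \<sigma>)^2 / pp \<sigma>)" by (rule hh2)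
  finally show ?thesis .
qed

lemma dH0:
  assumes r: "qubit_state \<rho>" and s: "qubit_state \<sigma>" and rr: "0 < r" "r \<le> 1"
  shows "deriv (deriv (\<lambda>\<theta>. H (eta r \<theta> \<phi>) \<sigma> - H (eta r \<theta> \<phi>) \<rho>)) 0
     = (r / 2 * (cmod (cc \<rho>)^2 / (1 - pp \<rho>) - cmod (cc \<sigma>)^2 / (1 - pp \<sigma>))) / ((1 + r) / 2 * ln 2)"
proof -
  have "eventually (\<lambda>\<theta>. H (eta r \<theta> \<phi>) \<sigma> - H (eta r \<theta> \<phi>) \<rho> =
     log 2 (gfun r (r * (cmod (cc \<rho>)^2 / (1 - pp \<rho>)) / 4) \<theta>) - log 2 (gfun r (r * (cmod (cc \<sigma>)^2 / (1 - pp \<sigma>)) / 4) \<theta>)) (nhds 0)"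
    using Phi_near0[OF r rr, of \<phi>] Phi_near0[OF s rr, of \<phi>] by eventually_elim (simp add: H_def)
  then have "deriv (deriv (\<lambda>\<theta>. H (eta r \<theta> \<phi>) \<sigma> - H (eta r \<theta> \<phi>) \<rho>)) 0 =
    deriv (deriv (\<lambda>\<theta>. log 2 (gfun r (r * (cmod (cc \<rho>)^2 / (1 - pp \<rho>)) / 4) \<theta>) - log 2 (gfun r (r * (cmod (cc \<sigma>)^2 / (1 - pp \<sigma>)) / 4) \<theta>))) 0"
    by (rule deriv2_cong)
  also have "\<dots> = 2 * (r * (cmod (cc \<rho>)^2 / (1 - pp \<rho>)) / 4 - r * (cmod (cc \<sigma>)^2 / (1 - pp \<sigma>)) / 4) * cos 0 / ((1 + r * cos 0) / 2 * ln 2)"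
    by (rule deriv2_logdiff) (use rr in \<open>simp_all add: gfun_def\<close>)
  also have "\<dots> = (r / 2 * (cmod (cc \<rho>)^2 / (1 - pp \<rho>) - cmod (cc \<sigma>)^2 / (1 - pp \<sigma>))) / ((1 + r) / 2 * ln 2)" by (rule hh3)
  finally show ?thesis .
qed

lemma dHpi:
  assumes r: "qubit_state \<rho>" and s: "qubit_state \<sigma>" and rr: "0 < r" "r \<le> 1"
  shows "deriv (deriv (\<lambda>\<theta>. H (eta r \<theta> \<phi>) \<sigma> - H (eta r \<theta> \<phi>) \<rho>)) pi
     = (r / 2 * (cmod (cc \<rho>)^2 / pp \<rho> - cmod (cc \<sigma>)^2 / pp \<sigma>)) / ((1 + r) / 2 * ln 2)"
proof -
  have "eventually (\<lambda>\<theta>. H (eta r \<theta> \<phi>) \<sigma> - H (eta r \<theta> \<phi>) \<rho> =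
     log 2 (gfun (-r) (- (r * (cmod (cc \<rho>)^2 / pp \<rho>) / 4)) \<theta>) - log 2 (gfun (-r) (- (r * (cmod (cc \<sigma>)^2 / pp \<sigma>) / 4)) \<theta>)) (nhds pi)"
    using Phi_nearpi[OF r rr, of \<phi>] Phi_nearpi[OF s rr, of \<phi>] by eventually_elim (simp add: H_def)
  then have "deriv (deriv (\<lambda>\<theta>. H (eta r \<theta> \<phi>) \<sigma> - H (eta r \<theta> \<phi>) \<rho>)) pi =
    deriv (deriv (\<lambda>\<theta>. log 2 (gfun (-r) (- (r * (cmod (cc \<rho>)^2 / pp \<rho>) / 4)) \<theta>) - log 2 (gfun (-r) (- (r * (cmod (cc \<sigma>)^2 / pp \<sigma>) / 4)) \<theta>))) pi"
    by (rule deriv2_cong)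
  also have "\<dots> = 2 * (- (r * (cmod (cc \<rho>)^2 / pp \<rho>) / 4) - - (r * (cmod (cc \<sigma>)^2 / pp \<sigma>) / 4)) * cos pi / ((1 + - r * cos pi) / 2 * ln 2)"
    by (rule deriv2_logdiff) (use rr in \<open>simp_all add: gfun_def\<close>)
  also have "\<dots> = (r / 2 * (cmod (cc \<rho>)^2 / pp \<rho> - cmod (cc \<sigma>)^2 / pp \<sigma>)) / ((1 + r) / 2 * ln 2)" by (rule hh4)
  finally show ?thesis .
qed

lemma cond_iff_Phi:
  assumes r: "qubit_state \<rho>" and s: "qubit_state \<sigma>"
  shows "cond \<rho> \<sigma> \<longleftrightarrow> (\<forall>r \<phi>. 0 < r \<and> r \<le> 1 \<and> 0 \<le> \<phi> \<and> \<phi> < 2*pi \<longrightarrow>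
               deriv (deriv (\<lambda>\<theta>. Phi (eta r \<theta> \<phi>) \<rho> - Phi (eta r \<theta> \<phi>) \<sigma>)) 0 \<ge> 0 \<and>
               deriv (deriv (\<lambda>\<theta>. Phi (eta r \<theta> \<phi>) \<rho> - Phi (eta r \<theta> \<phi>) \<sigma>)) pi \<ge> 0)"
proof
  assume c: "cond \<rho> \<sigma>"
  show "\<forall>r \<phi>. 0 < r \<and> r \<le> 1 \<and> 0 \<le> \<phi> \<and> \<phi> < 2*pi \<longrightarrow>
               deriv (deriv (\<lambda>\<theta>. Phi (eta r \<theta> \<phi>) \<rho> - Phi (eta r \<theta> \<phi>) \<sigma>)) 0 \<ge> 0 \<and>
               deriv (deriv (\<lambda>\<theta>. Phi (eta r \<theta> \<phi>) \<rho> - Phi (eta r \<theta> \<phi>) \<sigma>)) pi \<ge> 0"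
  proof (intro allI impI)
    fix r \<phi> :: real assume "0 < r \<and> r \<le> 1 \<and> 0 \<le> \<phi> \<and> \<phi> < 2*pi"
    then have rr: "0 < r" "r \<le> 1" by auto
    show "deriv (deriv (\<lambda>\<theta>. Phi (eta r \<theta> \<phi>) \<rho> - Phi (eta r \<theta> \<phi>) \<sigma>)) 0 \<ge> 0 \<and>
          deriv (deriv (\<lambda>\<theta>. Phi (eta r \<theta> \<phi>) \<rho> - Phi (eta r \<theta> \<phi>) \<sigma>)) pi \<ge> 0"
      unfolding dPhi0[OF r s rr] dPhipi[OF r s rr] using c rr unfolding cond_def by simp
  qed
next
  assume h: "\<forall>r \<phi>. 0 < r \<and> r \<le> 1 \<and> 0 \<le> \<phi> \<and> \<phi> < 2*pi \<longrightarrow>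
               deriv (deriv (\<lambda>\<theta>. Phi (eta r \<theta> \<phi>) \<rho> - Phi (eta r \<theta> \<phi>) \<sigma>)) 0 \<ge> 0 \<and>
               deriv (deriv (\<lambda>\<theta>. Phi (eta r \<theta> \<phi>) \<rho> - Phi (eta r \<theta> \<phi>) \<sigma>)) pi \<ge> 0"
  have rr: "(0::real) < 1" "(1::real) \<le> 1" by auto
  from h[rule_format, of 1 0] have "deriv (deriv (\<lambda>\<theta>. Phi (eta 1 \<theta> 0) \<rho> - Phi (eta 1 \<theta> 0) \<sigma>)) 0 \<ge> 0 \<and>
               deriv (deriv (\<lambda>\<theta>. Phi (eta 1 \<theta> 0) \<rho> - Phi (eta 1 \<theta> 0) \<sigma>)) pi \<ge> 0" by simp
  then show "cond \<rho> \<sigma>" unfolding dPhi0[OF r s rr] dPhipi[OF r s rr] cond_def by simp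
qed

lemma cond_iff_H:
  assumes r: "qubit_state \<rho>" and s: "qubit_state \<sigma>"
  shows "cond \<rho> \<sigma> \<longleftrightarrow> (\<forall>r \<phi>. 0 < r \<and> r \<le> 1 \<and> 0 \<le> \<phi> \<and> \<phi> < 2*pi \<longrightarrow>
               deriv (deriv (\<lambda>\<theta>. H (eta r \<theta> \<phi>) \<sigma> - H (eta r \<theta> \<phi>) \<rho>)) 0 \<ge> 0 \<and>
               deriv (deriv (\<lambda>\<theta>. H (eta r \<theta> \<phi>) \<sigma> - H (eta r \<theta> \<phi>) \<rho>)) pi \<ge> 0)"
proof -
  have pos: "(1 + r) / 2 * ln 2 > 0" if "0 < r" for r :: real using that by simp
  have sg: "(x / ((1 + r) / 2 * ln 2) \<ge> 0) \<longleftrightarrow> x \<ge> 0" if "0 < r" for x r :: real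
    using pos[OF that] by (simp add: zero_le_divide_iff)
  have "(\<forall>r \<phi>. 0 < r \<and> r \<le> 1 \<and> 0 \<le> \<phi> \<and> \<phi> < 2*pi \<longrightarrow>
               deriv (deriv (\<lambda>\<theta>. H (eta r \<theta> \<phi>) \<sigma> - H (eta r \<theta> \<phi>) \<rho>)) 0 \<ge> 0 \<and>
               deriv (deriv (\<lambda>\<theta>. H (eta r \<theta> \<phi>) \<sigma> - H (eta r \<theta> \<phi>) \<rho>)) pi \<ge> 0) \<longleftrightarrow>
        (\<forall>r \<phi>. 0 < r \<and> r \<le> 1 \<and> 0 \<le> \<phi> \<and> \<phi> < 2*pi \<longrightarrow>
               deriv (deriv (\<lambda>\<theta>. Phi (eta r \<theta> \<phi>) \<rho> - Phi (eta r \<theta> \<phi>) \<sigma>)) 0 \<ge> 0 \<and>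
               deriv (deriv (\<lambda>\<theta>. Phi (eta r \<theta> \<phi>) \<rho> - Phi (eta r \<theta> \<phi>) \<sigma>)) pi \<ge> 0)"
  proof (intro iff_allI imp_cong refl)
    fix r \<phi> :: real assume "0 < r \<and> r \<le> 1 \<and> 0 \<le> \<phi> \<and> \<phi> < 2*pi"
    then have rr: "0 < r" "r \<le> 1" by auto
    show "(deriv (deriv (\<lambda>\<theta>. H (eta r \<theta> \<phi>) \<sigma> - H (eta r \<theta> \<phi>) \<rho>)) 0 \<ge> 0 \<and>
               deriv (deriv (\<lambda>\<theta>. H (eta r \<theta> \<phi>) \<sigma> - H (eta r \<theta> \<phi>) \<rho>)) pi \<ge> 0) \<longleftrightarrow>
          (deriv (deriv (\<lambda>\<theta>. Phi (eta r \<theta> \<phi>) \<rho> - Phi (eta r \<theta> \<phi>) \<sigma>)) 0 \<ge> 0 \<and>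
               deriv (deriv (\<lambda>\<theta>. Phi (eta r \<theta> \<phi>) \<rho> - Phi (eta r \<theta> \<phi>) \<sigma>)) pi \<ge> 0)"
      unfolding dH0[OF r s rr] dHpi[OF r s rr] dPhi0[OF r s rr] dPhipi[OF r s rr] sg[OF rr(1)] ..
  qed
  then show ?thesis using cond_iff_Phi[OF r s] by simp
qed

theorem lemma16:
  fixes \<rho> \<sigma> :: "complex mat"
  assumes "qubit_state \<rho>" and "qubit_state \<sigma>"
  shows "((\<exists>E. qubit_channel E \<and> time_covariant E \<and> E \<rho> = \<sigma>) \<longleftrightarrow>
            (\<forall>r \<phi>. 0 < r \<and> r \<le> 1 \<and> 0 \<le> \<phi> \<and> \<phi> < 2*pi \<longrightarrow>
               deriv (deriv (\<lambda>\<theta>. Phi (eta r \<theta> \<phi>) \<rho> - Phi (eta r \<theta> \<phi>) \<sigma>)) 0 \<ge> 0 \<and>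
               deriv (deriv (\<lambda>\<theta>. Phi (eta r \<theta> \<phi>) \<rho> - Phi (eta r \<theta> \<phi>) \<sigma>)) pi \<ge> 0))
       \<and> ((\<exists>E. qubit_channel E \<and> time_covariant E \<and> E \<rho> = \<sigma>) \<longleftrightarrow>
            (\<forall>r \<phi>. 0 < r \<and> r \<le> 1 \<and> 0 \<le> \<phi> \<and> \<phi> < 2*pi \<longrightarrow>
               deriv (deriv (\<lambda>\<theta>. H (eta r \<theta> \<phi>) \<sigma> - H (eta r \<theta> \<phi>) \<rho>)) 0 \<ge> 0 \<and>
               deriv (deriv (\<lambda>\<theta>. H (eta r \<theta> \<phi>) \<sigma> - H (eta r \<theta> \<phi>) \<rho>)) pi \<ge> 0))"
proof -
  have ex: "(\<exists>E. qubit_channel E \<and> time_covariant E \<and> E \<rho> = \<sigma>) \<longleftrightarrow> cond \<rho> \<sigma>"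
    using forward[OF assms] backward[OF assms] by blast
  show ?thesis unfolding ex using cond_iff_Phi[OF assms] cond_iff_H[OF assms] by blast
qed


end
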